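(* Let $\kappa>0$ and $\mathcal{L}f=\frac{\kappa}{2}f''$. Let $\sigma:\mathbf{R}\to\mathbf{R}$ be Lipschitz with $\sigma(0)=0$ and $\mathrm{L}_\sigma:=\inf_x|\sigma(x)/x|>0$. Let $u_0:\mathbf{R}\to\mathbf{R}_+$ be bounded, lower semicontinuous, and strictly positive on a set of positive Lebesgue measure, and let $u$ be the mild solution of $\partial_tu_t(x)=\frac{\kappa}{2}\partial_x^2u_t(x)+\sigma(u_t(x))\,\partial^2_{tx}W(t,x)$ with initial datum $u_0$. If $\alpha,\beta>0$ satisfy $$\Big(\alpha-\frac{\mathrm{L}_\sigma^2}{4\pi}\Big)^2<\frac{\mathrm{L}_\sigma^4}{16\pi^2}-\kappa\beta,$$ then $\mathcal{M}_{\alpha,\beta}(u)=\infty$.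
   Context: $W$ is a two-parameter Brownian sheet. The mild solution is the predictable random field $u$ with $u_t(x)=(P_tu_0)(x)+\int_{[0,t]\times\mathbf{R}}p_{t-s}(y-x)\sigma(u_s(y))\,W(ds\,dy)$, where $p_t(x)=(2\pi\kappa t)^{-1/2}e^{-x^2/(2\kappa t)}$ and $(P_tf)(x)=\int p_t(y-x)f(y)\,dy$. For a predictable random field $v$ and $\alpha,\beta>0$, $\mathcal{M}_{\alpha,\beta}(v):=\Big[\int_0^\infty e^{-\beta t}\int_{\{x:|x|\ge\alpha t\}}\mathrm{E}(|v_t(x)|^2)\,dx\,dt\Big]^{1/2}$. *)

theory Defs
  imports "HOL-Probability.Probability"
begin

definition heat_kernel :: "real \<Rightarrow> real \<Rightarrow> real \<Rightarrow> real" where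
  "heat_kernel \<kappa> t x = exp (- (x\<^sup>2) / (2 * \<kappa> * t)) / sqrt (2 * pi * \<kappa> * t)"

definition heat_semigroup :: "real \<Rightarrow> real \<Rightarrow> (real \<Rightarrow> real) \<Rightarrow> real \<Rightarrow> real" where
  "heat_semigroup \<kappa> t f x = (\<integral>y. heat_kernel \<kappa> t (y - x) * f y \<partial>lborel)"

definition lsc :: "(real \<Rightarrow> real) \<Rightarrow> bool" where
  "lsc f \<longleftrightarrow> (\<forall>x c. c < f x \<longrightarrow> (\<forall>\<^sub>F y in at x. c < f y))"

definition L_sigma :: "(real \<Rightarrow> real) \<Rightarrow> real" where
  "L_sigma \<sigma> = Inf {\<bar>\<sigma> x / x\<bar> | x. x \<noteq> 0}"

text \<open>M: underlying probability space; F: filtration indexed by time;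
  W A: the white-noise mass of a Borel set A of [0,oo) x R with finite Lebesgue measure.\<close>
definition finite_ts_set :: "(real \<times> real) set \<Rightarrow> bool" where
  "finite_ts_set A \<longleftrightarrow> A \<in> sets (lborel \<Otimes>\<^sub>M lborel) \<and> A \<subseteq> {0..} \<times> UNIV
      \<and> emeasure (lborel \<Otimes>\<^sub>M lborel) A < \<infinity>"

definition white_noise ::
  "'a measure \<Rightarrow> (real \<Rightarrow> 'a measure) \<Rightarrow> ((real \<times> real) set \<Rightarrow> 'a \<Rightarrow> real) \<Rightarrow> bool" where
  "white_noise M F W \<longleftrightarrow>
     prob_space M \<and>
     filtration (space M) F \<and> (\<forall>t. sets (F t) \<subseteq> sets M) \<and>
     (\<forall>A. finite_ts_set A \<longrightarrow>
        W A \<in> borel_measurable M \<and>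
        (measure (lborel \<Otimes>\<^sub>M lborel) A > 0 \<longrightarrow>
            distributed M lborel (W A)
              (normal_density 0 (sqrt (measure (lborel \<Otimes>\<^sub>M lborel) A)))) \<and>
        (measure (lborel \<Otimes>\<^sub>M lborel) A = 0 \<longrightarrow> (AE \<omega> in M. W A \<omega> = 0))) \<and>
     (\<forall>A B. finite_ts_set A \<longrightarrow> finite_ts_set B \<longrightarrow> A \<inter> B = {} \<longrightarrow>
        (AE \<omega> in M. W (A \<union> B) \<omega> = W A \<omega> + W B \<omega>)) \<and>
     (\<forall>I (A :: nat \<Rightarrow> (real \<times> real) set). finite I \<longrightarrow> (\<forall>i\<in>I. finite_ts_set (A i)) \<longrightarrow>
        disjoint_family_on A I \<longrightarrow>
        prob_space.indep_vars M (\<lambda>_. borel) (\<lambda>i. W (A i)) I) \<and>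
     (\<forall>t A. finite_ts_set A \<longrightarrow> A \<subseteq> {0..t} \<times> UNIV \<longrightarrow> W A \<in> borel_measurable (F t)) \<and>
     (\<forall>t A. finite_ts_set A \<longrightarrow> A \<subseteq> {t<..} \<times> UNIV \<longrightarrow>
        prob_space.indep_sets M (\<lambda>i. if i then sets (F t) else sets (vimage_algebra (space M) (W A) borel))
           UNIV)"

definition predictable_sa :: "'a measure \<Rightarrow> (real \<Rightarrow> 'a measure) \<Rightarrow> (real \<times> real \<times> 'a) measure" where
  "predictable_sa M F = sigma ({0..} \<times> UNIV \<times> space M)
     ({{a<..b} \<times> A \<times> B | a b A B. 0 \<le> a \<and> a \<le> b \<and> A \<in> sets borel \<and> B \<in> sets (F a)} \<union>
      {{0} \<times> A \<times> B | A B. A \<in> sets borel \<and> B \<in> sets (F 0)})"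

definition predictable :: "'a measure \<Rightarrow> (real \<Rightarrow> 'a measure) \<Rightarrow> (real \<Rightarrow> real \<Rightarrow> 'a \<Rightarrow> real) \<Rightarrow> bool" where
  "predictable M F v \<longleftrightarrow> (\<lambda>(t, x, \<omega>). v t x \<omega>) \<in> borel_measurable (predictable_sa M F)"

definition L2_norm_sq :: "'a measure \<Rightarrow> (real \<Rightarrow> real \<Rightarrow> 'a \<Rightarrow> real) \<Rightarrow> ennreal" where
  "L2_norm_sq M v = (\<integral>\<^sup>+ \<omega>. (\<integral>\<^sup>+ z. indicator ({0..} \<times> UNIV) z * ennreal ((v (fst z) (snd z) \<omega>)\<^sup>2)
        \<partial>(lborel \<Otimes>\<^sub>M lborel)) \<partial>M)"

definition simple_integrand ::
  "(real \<Rightarrow> 'a measure) \<Rightarrow> (('a \<Rightarrow> real) \<times> real \<times> real \<times> real set) list \<Rightarrow> bool" where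
  "simple_integrand F ps \<longleftrightarrow> (\<forall>(X, a, b, A) \<in> set ps.
      0 \<le> a \<and> a \<le> b \<and> A \<in> sets borel \<and> bounded A \<and> X \<in> borel_measurable (F a) \<and> bounded (range X))"

definition simple_eval ::
  "(('a \<Rightarrow> real) \<times> real \<times> real \<times> real set) list \<Rightarrow> real \<Rightarrow> real \<Rightarrow> 'a \<Rightarrow> real" where
  "simple_eval ps s y \<omega> = (\<Sum>(X, a, b, A) \<leftarrow> ps. X \<omega> * indicator ({a<..b} \<times> A) (s, y))"

definition simple_stoch_int ::
  "((real \<times> real) set \<Rightarrow> 'a \<Rightarrow> real) \<Rightarrow> (('a \<Rightarrow> real) \<times> real \<times> real \<times> real set) list \<Rightarrow> 'a \<Rightarrow> real" where
  "simple_stoch_int W ps \<omega> = (\<Sum>(X, a, b, A) \<leftarrow> ps. X \<omega> * W ({a<..b} \<times> A) \<omega>)"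

definition walsh_integral ::
  "'a measure \<Rightarrow> (real \<Rightarrow> 'a measure) \<Rightarrow> ((real \<times> real) set \<Rightarrow> 'a \<Rightarrow> real)
     \<Rightarrow> (real \<Rightarrow> real \<Rightarrow> 'a \<Rightarrow> real) \<Rightarrow> ('a \<Rightarrow> real) \<Rightarrow> bool" where
  "walsh_integral M F W f Y \<longleftrightarrow>
     predictable M F f \<and> L2_norm_sq M f < \<infinity> \<and> Y \<in> borel_measurable M \<and>
     (\<exists>ps :: nat \<Rightarrow> (('a \<Rightarrow> real) \<times> real \<times> real \<times> real set) list.
        (\<forall>n. simple_integrand F (ps n)) \<and>
        (\<lambda>n. L2_norm_sq M (\<lambda>s y \<omega>. f s y \<omega> - simple_eval (ps n) s y \<omega>)) \<longlonglongrightarrow> 0 \<and>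
        (\<lambda>n. \<integral>\<^sup>+ \<omega>. ennreal ((simple_stoch_int W (ps n) \<omega> - Y \<omega>)\<^sup>2) \<partial>M) \<longlonglongrightarrow> 0)"

definition mild_solution ::
  "'a measure \<Rightarrow> (real \<Rightarrow> 'a measure) \<Rightarrow> ((real \<times> real) set \<Rightarrow> 'a \<Rightarrow> real) \<Rightarrow> real
     \<Rightarrow> (real \<Rightarrow> real) \<Rightarrow> (real \<Rightarrow> real) \<Rightarrow> (real \<Rightarrow> real \<Rightarrow> 'a \<Rightarrow> real) \<Rightarrow> bool" where
  "mild_solution M F W \<kappa> \<sigma> u0 u \<longleftrightarrow>
     predictable M F u \<and>
     (\<forall>x. \<forall>\<omega>\<in>space M. u 0 x \<omega> = u0 x) \<and>
     (\<forall>t>0. \<forall>x. \<exists>Y.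
        walsh_integral M F W
          (\<lambda>s y \<omega>. indicator {0..t} s * heat_kernel \<kappa> (t - s) (y - x) * \<sigma> (u s y \<omega>)) Y \<and>
        (AE \<omega> in M. u t x \<omega> = heat_semigroup \<kappa> t u0 x + Y \<omega>))"

definition M_norm :: "'a measure \<Rightarrow> real \<Rightarrow> real \<Rightarrow> (real \<Rightarrow> real \<Rightarrow> 'a \<Rightarrow> real) \<Rightarrow> ennreal" where
  "M_norm M \<alpha> \<beta> v =
     (let I = (\<integral>\<^sup>+ t. indicator {0..} t * ennreal (exp (- \<beta> * t)) *
                 (\<integral>\<^sup>+ x. indicator {x. \<bar>x\<bar> \<ge> \<alpha> * t} x *
                      (\<integral>\<^sup>+ \<omega>. ennreal ((v t x \<omega>)\<^sup>2) \<partial>M) \<partial>lborel) \<partial>lborel)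
      in if I = \<infinity> then \<infinity> else ennreal (sqrt (enn2real I)))"

end

theory Submission
  imports Defs
begin


abbreviation mu :: "(real \<times> real) set \<Rightarrow> real" where
  "mu \<equiv> measure (lborel \<Otimes>\<^sub>M lborel)"

locale wn = prob_space M for M :: "'a measure" +
  fixes F :: "real \<Rightarrow> 'a measure" and W :: "(real \<times> real) set \<Rightarrow> 'a \<Rightarrow> real"
  assumes wn: "white_noise M F W"
begin

lemma filt: "filtration (space M) F" using wn by (simp add: white_noise_def)
lemma Fsub: "sets (F t) \<subseteq> sets M" using wn by (simp add: white_noise_def)
lemma Fspace: "space (F t) = space M" using filtration.space_F[OF filt] .
lemma Fmono: "s \<le> t \<Longrightarrow> sets (F s) \<subseteq> sets (F t)" using filtration.sets_F_mono[OF filt] .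

lemma measF: "X \<in> borel_measurable (F t) \<Longrightarrow> X \<in> borel_measurable M"
  by (rule measurable_from_subalg[of _ "F t"]) (auto simp: subalgebra_def Fsub Fspace)

lemma measF_mono: "X \<in> borel_measurable (F s) \<Longrightarrow> s \<le> t \<Longrightarrow> X \<in> borel_measurable (F t)"
  by (rule measurable_from_subalg[of _ "F s"]) (auto simp: subalgebra_def Fmono Fspace)

lemma W_meas: "finite_ts_set A \<Longrightarrow> W A \<in> borel_measurable M"
  using wn by (simp add: white_noise_def)

lemma W_F: "finite_ts_set A \<Longrightarrow> A \<subseteq> {0..t} \<times> UNIV \<Longrightarrow> W A \<in> borel_measurable (F t)"
  using wn by (simp add: white_noise_def)

lemma W_add: "finite_ts_set A \<Longrightarrow> finite_ts_set B \<Longrightarrow> A \<inter> B = {} \<Longrightarrow>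
   AE \<omega> in M. W (A \<union> B) \<omega> = W A \<omega> + W B \<omega>"
  using wn by (simp add: white_noise_def)

lemma W_mom:
  assumes A: "finite_ts_set A"
  shows "integrable M (W A)" "integrable M (\<lambda>\<omega>. (W A \<omega>)\<^sup>2)"
    "expectation (W A) = 0" "expectation (\<lambda>\<omega>. (W A \<omega>)\<^sup>2) = mu A"
proof -
  have m: "W A \<in> borel_measurable M" using W_meas[OF A] .
  have "(mu A > 0 \<longrightarrow> distributed M lborel (W A) (normal_density 0 (sqrt (mu A)))) \<and>
        (mu A = 0 \<longrightarrow> (AE \<omega> in M. W A \<omega> = 0))"
    using wn A by (simp add: white_noise_def)
  moreover have "mu A \<ge> 0" by simp
  ultimately consider (p) "mu A > 0" "distributed M lborel (W A) (normal_density 0 (sqrt (mu A)))"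
    | (z) "mu A = 0" "AE \<omega> in M. W A \<omega> = 0" by linarith
  then have "integrable M (W A) \<and> integrable M (\<lambda>\<omega>. (W A \<omega>)\<^sup>2) \<and>
    expectation (W A) = 0 \<and> expectation (\<lambda>\<omega>. (W A \<omega>)\<^sup>2) = mu A"
  proof cases
    case p
    let ?s = "sqrt (mu A)"
    have s: "?s > 0" using p by simp
    have i1: "integrable M (W A)"
      using distributed_integrable[OF p(2), of "\<lambda>x. x"] integrable_normal_moment_nz_1[OF s] by auto
    have i2: "integrable M (\<lambda>\<omega>. (W A \<omega>)\<^sup>2)"
      using distributed_integrable[OF p(2), of "\<lambda>x. x\<^sup>2"] integrable_normal_moment[OF s, where k=2 and \<mu>=0] by auto
    have e1: "expectation (W A) = 0"
      using distributed_integral[OF p(2), of "\<lambda>x. x"] integral_normal_moment_nz_1[OF s, of 0] by simp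
    have e2: "expectation (\<lambda>\<omega>. (W A \<omega>)\<^sup>2) = mu A"
      using distributed_integral[OF p(2), of "\<lambda>x. x\<^sup>2"] integral_normal_moment_even[OF s, where k=1 and \<mu>=0] s p(1)
      by simp
    show ?thesis using i1 i2 e1 e2 by simp
  next
    case z
    have a1: "AE \<omega> in M. W A \<omega> = 0" using z by simp
    have a2: "AE \<omega> in M. (W A \<omega>)\<^sup>2 = 0" using z(2) by eventually_elim simp
    have "integrable M (W A)" using integrable_cong_AE[OF m _ a1] by simp
    moreover have "integrable M (\<lambda>\<omega>. (W A \<omega>)\<^sup>2)" using integrable_cong_AE[OF _ _ a2] m by simp
    moreover have "expectation (W A) = 0" using integral_cong_AE[OF m _ a1] by simp
    moreover have "expectation (\<lambda>\<omega>. (W A \<omega>)\<^sup>2) = mu A" using integral_cong_AE[OF _ _ a2] m z(1) by simp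
    ultimately show ?thesis by simp
  qed
  then show "integrable M (W A)" "integrable M (\<lambda>\<omega>. (W A \<omega>)\<^sup>2)"
    "expectation (W A) = 0" "expectation (\<lambda>\<omega>. (W A \<omega>)\<^sup>2) = mu A" by auto
qed

lemma W_indep:
  assumes G: "finite_ts_set G" "G \<subseteq> {m<..} \<times> UNIV"
    and V: "V \<in> borel_measurable (F m)" and h: "h \<in> borel_measurable borel"
  shows "indep_var borel V borel (\<lambda>\<omega>. h (W G \<omega>))"
proof -
  have I: "indep_sets (\<lambda>i. if i then sets (F m) else sets (vimage_algebra (space M) (W G) borel)) UNIV"
    using wn G by (simp add: white_noise_def)
  have mW: "W G \<in> borel_measurable M" using W_meas[OF G(1)] .
  show ?thesis
    unfolding indep_var_def indep_vars_def2
  proof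
    show "\<forall>i\<in>UNIV. random_variable (case_bool borel borel i) (case_bool V (\<lambda>\<omega>. h (W G \<omega>)) i)"
      using measF[OF V] mW h by (auto split: bool.split)
    show "indep_sets (\<lambda>i. {case_bool V (\<lambda>\<omega>. h (W G \<omega>)) i -` A \<inter> space M |A.
        A \<in> sets (case_bool borel borel i)}) UNIV"
    proof (rule indep_sets_mono_sets[OF I])
      fix i :: bool
      show "{case_bool V (\<lambda>\<omega>. h (W G \<omega>)) i -` A \<inter> space M |A. A \<in> sets (case_bool borel borel i)}
         \<subseteq> (if i then sets (F m) else sets (vimage_algebra (space M) (W G) borel))"
      proof (cases i)
        case True
        have "V -` A \<inter> space M \<in> sets (F m)" if "A \<in> sets borel" for A
          using measurable_sets[OF V that] by (simp add: Fspace)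
        then show ?thesis using True by auto
      next
        case False
        have "(\<lambda>\<omega>. h (W G \<omega>)) -` A \<inter> space M \<in> sets (vimage_algebra (space M) (W G) borel)"
          if "A \<in> sets borel" for A
        proof -
          have "(\<lambda>\<omega>. h (W G \<omega>)) -` A \<inter> space M = W G -` (h -` A \<inter> space borel) \<inter> space M" by auto
          moreover have "h -` A \<inter> space borel \<in> sets borel" using h that by (rule measurable_sets)
          ultimately show ?thesis
            by (subst sets_vimage_algebra2) (auto simp: measurable_space[OF mW])
        qed
        then show ?thesis using False by auto
      qed
    qed
  qed
qed


end

lemma finite_ts_subset: "finite_ts_set B \<Longrightarrow> A \<subseteq> B \<Longrightarrow> A \<in> sets (lborel \<Otimes>\<^sub>M lborel) \<Longrightarrow> finite_ts_set A"
  unfolding finite_ts_set_def using emeasure_mono[of A B "lborel \<Otimes>\<^sub>M lborel"]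
  by (auto simp: less_le_trans order_le_less_trans)

lemma finite_ts_Un: "finite_ts_set A \<Longrightarrow> finite_ts_set B \<Longrightarrow> finite_ts_set (A \<union> B)"
  unfolding finite_ts_set_def using emeasure_subadditive[of A "lborel \<Otimes>\<^sub>M lborel" B]
  by (auto simp: ennreal_add_less_top intro: order_le_less_trans)

lemma finite_ts_meas: "finite_ts_set A \<Longrightarrow> A \<in> sets (lborel \<Otimes>\<^sub>M lborel)"
  by (simp add: finite_ts_set_def)

lemma finite_ts_fin: "finite_ts_set A \<Longrightarrow> emeasure (lborel \<Otimes>\<^sub>M lborel) A \<noteq> \<infinity>"
  using less_top[of "emeasure (lborel \<Otimes>\<^sub>M lborel) A"] by (auto simp: finite_ts_set_def)

lemma finite_ts_rect:
  assumes "0 \<le> a" "A \<in> sets borel" "bounded A"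
  shows "finite_ts_set ({a<..b} \<times> A)"
proof -
  have "emeasure (lborel \<Otimes>\<^sub>M lborel) ({a<..b} \<times> A) = emeasure lborel {a<..b} * emeasure lborel A"
    using assms by (intro lborel.emeasure_pair_measure_Times) auto
  moreover have "emeasure lborel {a<..b} < \<infinity>" by (intro emeasure_bounded_finite) simp
  moreover have "emeasure lborel A < \<infinity>" using assms by (intro emeasure_bounded_finite)
  ultimately have "emeasure (lborel \<Otimes>\<^sub>M lborel) ({a<..b} \<times> A) < \<infinity>"
    by (simp add: ennreal_mult_less_top)
  then show ?thesis using assms unfolding finite_ts_set_def by auto
qed

lemma abs_prod_le_sq: "\<bar>(x::real) * y\<bar> \<le> x\<^sup>2 + y\<^sup>2"
proof -
  have "2*(\<bar>x\<bar>*\<bar>y\<bar>) \<le> x\<^sup>2 + y\<^sup>2" using sum_squares_bound[of "\<bar>x\<bar>" "\<bar>y\<bar>"] by (simp add: mult.assoc)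
  moreover have "0 \<le> \<bar>x\<bar>*\<bar>y\<bar>" by simp
  ultimately show ?thesis unfolding abs_mult by linarith
qed

context wn begin

lemma bdd_int: "Z \<in> borel_measurable M \<Longrightarrow> (\<And>\<omega>. \<bar>Z \<omega>\<bar> \<le> (B::real)) \<Longrightarrow> integrable M Z"
  by (rule integrable_const_bound[where B=B]) auto

lemma int_ZWW:
  assumes Z: "Z \<in> borel_measurable M" "\<And>\<omega>. \<bar>Z \<omega>\<bar> \<le> B" and G: "finite_ts_set G" "finite_ts_set G'"
  shows "integrable M (\<lambda>\<omega>. Z \<omega> * W G \<omega> * W G' \<omega>)"
proof (rule Bochner_Integration.integrable_bound)
  show "integrable M (\<lambda>\<omega>. B * ((W G \<omega>)\<^sup>2 + (W G' \<omega>)\<^sup>2))"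
    using W_mom[OF G(1)] W_mom[OF G(2)] by auto
  show "(\<lambda>\<omega>. Z \<omega> * W G \<omega> * W G' \<omega>) \<in> borel_measurable M"
    using Z W_meas[OF G(1)] W_meas[OF G(2)] by auto
  show "AE \<omega> in M. norm (Z \<omega> * W G \<omega> * W G' \<omega>) \<le> norm (B * ((W G \<omega>)\<^sup>2 + (W G' \<omega>)\<^sup>2))"
  proof (rule AE_I2)
    fix \<omega>
    have B: "0 \<le> B" using Z(2)[of \<omega>] by simp
    have "\<bar>W G \<omega> * W G' \<omega>\<bar> \<le> (W G \<omega>)\<^sup>2 + (W G' \<omega>)\<^sup>2"
      by (rule abs_prod_le_sq)
    then have "\<bar>Z \<omega>\<bar> * \<bar>W G \<omega> * W G' \<omega>\<bar> \<le> B * ((W G \<omega>)\<^sup>2 + (W G' \<omega>)\<^sup>2)"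
      using Z(2)[of \<omega>] B by (intro mult_mono) auto
    then show "norm (Z \<omega> * W G \<omega> * W G' \<omega>) \<le> norm (B * ((W G \<omega>)\<^sup>2 + (W G' \<omega>)\<^sup>2))"
      using B by (simp add: abs_mult mult.assoc)
  qed
qed

lemma int_VW:
  assumes Z: "Z \<in> borel_measurable M" "\<And>\<omega>. \<bar>Z \<omega>\<bar> \<le> B" and G: "finite_ts_set G"
  shows "integrable M (\<lambda>\<omega>. Z \<omega> * W G \<omega>)"
  using int_ZWW[OF Z G G(1)] Z W_meas[OF G]
proof -
  have B: "0 \<le> B" using Z(2)[of undefined] by simp
  show ?thesis
  proof (rule Bochner_Integration.integrable_bound[where f="\<lambda>\<omega>. B * \<bar>W G \<omega>\<bar>"])
    show "integrable M (\<lambda>\<omega>. B * \<bar>W G \<omega>\<bar>)" using W_mom(1)[OF G] by auto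
    show "(\<lambda>\<omega>. Z \<omega> * W G \<omega>) \<in> borel_measurable M" using Z(1) W_meas[OF G] by auto
    show "AE \<omega> in M. norm (Z \<omega> * W G \<omega>) \<le> norm (B * \<bar>W G \<omega>\<bar>)"
      using Z(2) B by (auto intro!: AE_I2 simp: abs_mult intro: mult_right_mono)
  qed
qed

lemma E_VW:
  assumes G: "finite_ts_set G" "G \<subseteq> {m<..} \<times> UNIV"
    and V: "V \<in> borel_measurable (F m)" "integrable M V"
  shows "expectation (\<lambda>\<omega>. V \<omega> * W G \<omega>) = 0"
  using indep_var_lebesgue_integral[OF W_indep[OF G V(1), of "\<lambda>x. x"] V(2)] W_mom[OF G(1)] by simp

lemma E_ZW2:
  assumes G: "finite_ts_set G" "G \<subseteq> {m<..} \<times> UNIV"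
    and Z: "Z \<in> borel_measurable (F m)" "\<And>\<omega>. \<bar>Z \<omega>\<bar> \<le> B"
  shows "expectation (\<lambda>\<omega>. Z \<omega> * W G \<omega> * W G \<omega>) = expectation Z * mu G"
proof -
  have "integrable M Z" using bdd_int[OF measF[OF Z(1)] Z(2)] .
  from indep_var_lebesgue_integral[OF W_indep[OF G Z(1), of "\<lambda>x. x\<^sup>2"] this] W_mom[OF G(1)]
  show ?thesis by (simp add: power2_eq_square mult.assoc)
qed

lemma E_DJ:
  assumes G: "finite_ts_set G" "G \<subseteq> {m<..} \<times> UNIV" "finite_ts_set G'" "G' \<subseteq> {m<..} \<times> UNIV"
    and dj: "G \<inter> G' = {}"
    and Z: "Z \<in> borel_measurable (F m)" "\<And>\<omega>. \<bar>Z \<omega>\<bar> \<le> B"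
  shows "expectation (\<lambda>\<omega>. Z \<omega> * W G \<omega> * W G' \<omega>) = 0"
proof -
  have U: "finite_ts_set (G \<union> G')" "G \<union> G' \<subseteq> {m<..} \<times> UNIV" using G finite_ts_Un by auto
  have ZM: "Z \<in> borel_measurable M" using measF[OF Z(1)] .
  have ae: "AE \<omega> in M. Z \<omega> * W (G \<union> G') \<omega> * W (G \<union> G') \<omega> =
     Z \<omega> * W G \<omega> * W G \<omega> + 2 * (Z \<omega> * W G \<omega> * W G' \<omega>) + Z \<omega> * W G' \<omega> * W G' \<omega>"
    using W_add[OF G(1) G(3) dj] by eventually_elim (simp add: algebra_simps)
  have "expectation (\<lambda>\<omega>. Z \<omega> * W (G \<union> G') \<omega> * W (G \<union> G') \<omega>) =
     expectation (\<lambda>\<omega>. Z \<omega> * W G \<omega> * W G \<omega> + 2 * (Z \<omega> * W G \<omega> * W G' \<omega>) + Z \<omega> * W G' \<omega> * W G' \<omega>)"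
    by (rule integral_cong_AE) (use ae ZM W_meas[OF U(1)] W_meas[OF G(1)] W_meas[OF G(3)] in auto)
  also have "\<dots> = expectation (\<lambda>\<omega>. Z \<omega> * W G \<omega> * W G \<omega>) + 2 * expectation (\<lambda>\<omega>. Z \<omega> * W G \<omega> * W G' \<omega>)
      + expectation (\<lambda>\<omega>. Z \<omega> * W G' \<omega> * W G' \<omega>)"
    using int_ZWW[OF ZM Z(2) G(1) G(1)] int_ZWW[OF ZM Z(2) G(1) G(3)] int_ZWW[OF ZM Z(2) G(3) G(3)]
    by simp
  finally have "expectation Z * mu (G \<union> G') = expectation Z * mu G + 2 * expectation (\<lambda>\<omega>. Z \<omega> * W G \<omega> * W G' \<omega>)
      + expectation Z * mu G'"
    using E_ZW2[OF U Z] E_ZW2[OF G(1,2) Z] E_ZW2[OF G(3,4) Z] by simp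
  moreover have "mu (G \<union> G') = mu G + mu G'"
    by (rule measure_Union[OF finite_ts_fin[OF G(1)] finite_ts_fin[OF G(3)] finite_ts_meas[OF G(1)] finite_ts_meas[OF G(3)] dj])
  ultimately show ?thesis by (simp add: algebra_simps)
qed

lemma E_PL:
  assumes G: "finite_ts_set G1" "G1 \<subseteq> {m<..} \<times> UNIV" "finite_ts_set G2" "G2 \<subseteq> {m<..} \<times> UNIV"
    and Z: "Z \<in> borel_measurable (F m)" "\<And>\<omega>. \<bar>Z \<omega>\<bar> \<le> B"
  shows "expectation (\<lambda>\<omega>. Z \<omega> * W G1 \<omega> * W G2 \<omega>) = expectation Z * mu (G1 \<inter> G2)"
proof -
  define H1 where "H1 = G1 - G2"
  define H2 where "H2 = G1 \<inter> G2"
  define H3 where "H3 = G2 - G1"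
  note mG = finite_ts_meas[OF G(1)] finite_ts_meas[OF G(3)]
  have H: "finite_ts_set H1" "finite_ts_set H2" "finite_ts_set H3"
    unfolding H1_def H2_def H3_def using G mG by (auto intro: finite_ts_subset)
  have Hs: "H1 \<subseteq> {m<..} \<times> UNIV" "H2 \<subseteq> {m<..} \<times> UNIV" "H3 \<subseteq> {m<..} \<times> UNIV"
    unfolding H1_def H2_def H3_def using G by auto
  have e1: "G1 = H1 \<union> H2" "H1 \<inter> H2 = {}" "G2 = H3 \<union> H2" "H3 \<inter> H2 = {}" "H1 \<inter> H3 = {}" "H2 \<inter> H3 = {}"
    unfolding H1_def H2_def H3_def by auto
  have ZM: "Z \<in> borel_measurable M" using measF[OF Z(1)] .
  have ae: "AE \<omega> in M. Z \<omega> * W G1 \<omega> * W G2 \<omega> =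
    Z \<omega> * W H1 \<omega> * W H3 \<omega> + Z \<omega> * W H1 \<omega> * W H2 \<omega> + Z \<omega> * W H2 \<omega> * W H3 \<omega> + Z \<omega> * W H2 \<omega> * W H2 \<omega>"
    using W_add[OF H(1) H(2) e1(2)] W_add[OF H(3) H(2) e1(4)]
    by eventually_elim (simp add: e1(1)[symmetric] e1(3)[symmetric] algebra_simps)
  have "expectation (\<lambda>\<omega>. Z \<omega> * W G1 \<omega> * W G2 \<omega>) = expectation (\<lambda>\<omega>.
    Z \<omega> * W H1 \<omega> * W H3 \<omega> + Z \<omega> * W H1 \<omega> * W H2 \<omega> + Z \<omega> * W H2 \<omega> * W H3 \<omega> + Z \<omega> * W H2 \<omega> * W H2 \<omega>)"
    by (rule integral_cong_AE) (use ae ZM W_meas H G in auto)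
  also have "\<dots> = expectation (\<lambda>\<omega>. Z \<omega> * W H1 \<omega> * W H3 \<omega>) + expectation (\<lambda>\<omega>. Z \<omega> * W H1 \<omega> * W H2 \<omega>)
     + expectation (\<lambda>\<omega>. Z \<omega> * W H2 \<omega> * W H3 \<omega>) + expectation (\<lambda>\<omega>. Z \<omega> * W H2 \<omega> * W H2 \<omega>)"
    using int_ZWW[OF ZM Z(2)] H by simp
  also have "\<dots> = expectation Z * mu H2"
    using E_DJ[OF H(1) Hs(1) H(3) Hs(3) e1(5) Z] E_DJ[OF H(1) Hs(1) H(2) Hs(2) e1(2) Z]
      E_DJ[OF H(2) Hs(2) H(3) Hs(3) e1(6) Z] E_ZW2[OF H(2) Hs(2) Z] by simp
  finally show ?thesis by (simp add: H2_def)
qed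

lemma E_PW:
  assumes a: "0 \<le> a" "a \<le> m" and A: "A \<in> sets borel" "bounded A" "A' \<in> sets borel" "bounded A'"
    and Z: "Z \<in> borel_measurable (F m)" "\<And>\<omega>. \<bar>Z \<omega>\<bar> \<le> B"
  shows "expectation (\<lambda>\<omega>. Z \<omega> * W ({a<..b} \<times> A) \<omega> * W ({m<..b'} \<times> A') \<omega>)
     = expectation Z * mu ({a<..b} \<times> A \<inter> {m<..b'} \<times> A')"
proof -
  define R where "R = {a<..b} \<times> A"
  define Rm where "Rm = {a<..min b m} \<times> A"
  define Rp where "Rp = {m<..b} \<times> A"
  define R' where "R' = {m<..b'} \<times> A'"
  have fin: "finite_ts_set R" "finite_ts_set Rm" "finite_ts_set Rp" "finite_ts_set R'"
    unfolding R_def Rm_def Rp_def R'_def using a A by (auto intro!: finite_ts_rect)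
  have dj: "Rm \<inter> Rp = {}" unfolding Rm_def Rp_def using a by auto
  have iu: "{a<..b} = {a<..min b m} \<union> {m<..b}" using a by (auto simp: min_def)
  have un: "R = Rm \<union> Rp" unfolding R_def Rm_def Rp_def by (subst iu) (rule Sigma_Un_distrib1)
  have ZM: "Z \<in> borel_measurable M" using measF[OF Z(1)] .
  have ae: "AE \<omega> in M. Z \<omega> * W R \<omega> * W R' \<omega> = (Z \<omega> * W Rm \<omega>) * W R' \<omega> + Z \<omega> * W Rp \<omega> * W R' \<omega>"
    using W_add[OF fin(2,3) dj] by eventually_elim (simp add: un algebra_simps)
  have mR: "W R \<in> borel_measurable M" "W Rm \<in> borel_measurable M" "W Rp \<in> borel_measurable M"
    "W R' \<in> borel_measurable M" using W_meas fin by auto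
  have i1: "integrable M (\<lambda>\<omega>. (Z \<omega> * W Rm \<omega>) * W R' \<omega>)"
    using int_ZWW[OF ZM Z(2) fin(2) fin(4)] by (simp add: mult.assoc)
  have i2: "integrable M (\<lambda>\<omega>. Z \<omega> * W Rp \<omega> * W R' \<omega>)"
    using int_ZWW[OF ZM Z(2) fin(3) fin(4)] .
  have "expectation (\<lambda>\<omega>. Z \<omega> * W R \<omega> * W R' \<omega>) =
      expectation (\<lambda>\<omega>. (Z \<omega> * W Rm \<omega>) * W R' \<omega> + Z \<omega> * W Rp \<omega> * W R' \<omega>)"
  proof (rule integral_cong_AE)
    show "(\<lambda>\<omega>. Z \<omega> * W R \<omega> * W R' \<omega>) \<in> borel_measurable M" using ZM mR by measurable
    show "(\<lambda>\<omega>. (Z \<omega> * W Rm \<omega>) * W R' \<omega> + Z \<omega> * W Rp \<omega> * W R' \<omega>) \<in> borel_measurable M"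
      using ZM mR by measurable
  qed (rule ae)
  also have "\<dots> = expectation (\<lambda>\<omega>. (Z \<omega> * W Rm \<omega>) * W R' \<omega>) + expectation (\<lambda>\<omega>. Z \<omega> * W Rp \<omega> * W R' \<omega>)"
    by (rule Bochner_Integration.integral_add[OF i1 i2])
  also have "expectation (\<lambda>\<omega>. (Z \<omega> * W Rm \<omega>) * W R' \<omega>) = 0"
  proof (rule E_VW)
    show "finite_ts_set R'" "R' \<subseteq> {m<..} \<times> UNIV" using fin by (auto simp: R'_def)
    have "W Rm \<in> borel_measurable (F m)" using fin(2) a by (intro W_F) (auto simp: Rm_def)
    then show "(\<lambda>\<omega>. Z \<omega> * W Rm \<omega>) \<in> borel_measurable (F m)" using Z(1) by simp
    show "integrable M (\<lambda>\<omega>. Z \<omega> * W Rm \<omega>)" using int_VW[OF ZM Z(2) fin(2)] .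
  qed
  also have "expectation (\<lambda>\<omega>. Z \<omega> * W Rp \<omega> * W R' \<omega>) = expectation Z * mu (Rp \<inter> R')"
    using fin by (intro E_PL[OF _ _ _ _ Z]) (auto simp: Rp_def R'_def)
  also have "Rp \<inter> R' = R \<inter> R'" unfolding Rp_def R_def R'_def using a by auto
  finally show ?thesis by (simp add: R_def R'_def)
qed

end


definition sc :: "(('a \<Rightarrow> real) \<times> real \<times> real \<times> real set) \<Rightarrow> 'a \<Rightarrow> real" where
  "sc p = fst p"
definition sa :: "(('a \<Rightarrow> real) \<times> real \<times> real \<times> real set) \<Rightarrow> real" where
  "sa p = fst (snd p)"
definition sb :: "(('a \<Rightarrow> real) \<times> real \<times> real \<times> real set) \<Rightarrow> real" where
  "sb p = fst (snd (snd p))"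
definition sA :: "(('a \<Rightarrow> real) \<times> real \<times> real \<times> real set) \<Rightarrow> real set" where
  "sA p = snd (snd (snd p))"
definition sR :: "(('a \<Rightarrow> real) \<times> real \<times> real \<times> real set) \<Rightarrow> (real \<times> real) set" where
  "sR p = {sa p<..sb p} \<times> sA p"

lemma sum_list_map_nth: "sum_list (map f xs) = (\<Sum>i<length xs. f (xs ! i))"
  by (simp add: sum_list_sum_nth atLeast0LessThan)

lemma simple_stoch_int_nth:
  "simple_stoch_int W ps \<omega> = (\<Sum>i<length ps. sc (ps!i) \<omega> * W (sR (ps!i)) \<omega>)"
proof -
  have "\<And>p. (\<lambda>(X, a, b, A). X \<omega> * W ({a<..b} \<times> A) \<omega>) p = sc p \<omega> * W (sR p) \<omega>"
    by (auto simp: sc_def sR_def sa_def sb_def sA_def split: prod.split)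
  then show ?thesis unfolding simple_stoch_int_def sum_list_map_nth by simp
qed

lemma simple_eval_nth:
  "simple_eval ps s y \<omega> = (\<Sum>i<length ps. sc (ps!i) \<omega> * indicator (sR (ps!i)) (s, y))"
proof -
  have "\<And>p. (\<lambda>(X, a, b, A). X \<omega> * indicator ({a<..b} \<times> A) (s, y)) p = sc p \<omega> * indicator (sR p) (s, y)"
    by (auto simp: sc_def sR_def sa_def sb_def sA_def split: prod.split)
  then show ?thesis unfolding simple_eval_def sum_list_map_nth by simp
qed

lemma simple_props:
  assumes "simple_integrand F ps" "p \<in> set ps"
  shows "0 \<le> sa p" "sA p \<in> sets borel" "bounded (sA p)" "sc p \<in> borel_measurable (F (sa p))"
    "\<exists>B. \<forall>\<omega>. \<bar>sc p \<omega>\<bar> \<le> B" "finite_ts_set (sR p)" "sR p \<subseteq> {sa p<..} \<times> UNIV"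
proof -
  obtain X a b A where p: "p = (X, a, b, A)" by (cases p) auto
  have *: "0 \<le> a" "a \<le> b" "A \<in> sets borel" "bounded A" "X \<in> borel_measurable (F a)" "bounded (range X)"
    using assms unfolding simple_integrand_def p by auto
  show "0 \<le> sa p" "sA p \<in> sets borel" "bounded (sA p)" "sc p \<in> borel_measurable (F (sa p))"
    using * by (auto simp: p sa_def sA_def sc_def)
  show "\<exists>B. \<forall>\<omega>. \<bar>sc p \<omega>\<bar> \<le> B" using *(6) unfolding bounded_iff by (auto simp: p sc_def)
  show "finite_ts_set (sR p)" using * by (auto simp: p sR_def sa_def sb_def sA_def intro!: finite_ts_rect)
  show "sR p \<subseteq> {sa p<..} \<times> UNIV" by (auto simp: sR_def)
qed

context wn begin

lemma simple_pair:
  assumes ps: "simple_integrand F ps" and p: "p \<in> set ps" and q: "q \<in> set ps"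
  shows "integrable M (\<lambda>\<omega>. sc p \<omega> * sc q \<omega> * W (sR p) \<omega> * W (sR q) \<omega>)"
    "expectation (\<lambda>\<omega>. sc p \<omega> * sc q \<omega> * W (sR p) \<omega> * W (sR q) \<omega>)
      = expectation (\<lambda>\<omega>. sc p \<omega> * sc q \<omega>) * mu (sR p \<inter> sR q)"
proof -
  note P = simple_props[OF ps p] and Q = simple_props[OF ps q]
  obtain B1 where B1: "\<And>\<omega>. \<bar>sc p \<omega>\<bar> \<le> B1" using P(5) by auto
  obtain B2 where B2: "\<And>\<omega>. \<bar>sc q \<omega>\<bar> \<le> B2" using Q(5) by auto
  have Zb: "\<bar>sc p \<omega> * sc q \<omega>\<bar> \<le> B1 * B2" for \<omega>
    unfolding abs_mult using B1[of \<omega>] B2[of \<omega>] by (intro mult_mono) auto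
  have ZM: "(\<lambda>\<omega>. sc p \<omega> * sc q \<omega>) \<in> borel_measurable M" using measF[OF P(4)] measF[OF Q(4)] by simp
  show "integrable M (\<lambda>\<omega>. sc p \<omega> * sc q \<omega> * W (sR p) \<omega> * W (sR q) \<omega>)"
    using int_ZWW[OF ZM Zb P(6) Q(6)] .
  show "expectation (\<lambda>\<omega>. sc p \<omega> * sc q \<omega> * W (sR p) \<omega> * W (sR q) \<omega>)
      = expectation (\<lambda>\<omega>. sc p \<omega> * sc q \<omega>) * mu (sR p \<inter> sR q)"
  proof (cases "sa p \<le> sa q")
    case True
    have Z: "(\<lambda>\<omega>. sc p \<omega> * sc q \<omega>) \<in> borel_measurable (F (sa q))"
      using measF_mono[OF P(4) True] Q(4) by simp
    show ?thesis using E_PW[OF P(1) True P(2,3) Q(2,3) Z Zb, of "sb p" "sb q"] by (simp add: sR_def)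
  next
    case False
    have Z: "(\<lambda>\<omega>. sc p \<omega> * sc q \<omega>) \<in> borel_measurable (F (sa p))"
      using measF_mono[OF Q(4)] False P(4) by simp
    have "expectation (\<lambda>\<omega>. sc p \<omega> * sc q \<omega> * W (sR q) \<omega> * W (sR p) \<omega>)
      = expectation (\<lambda>\<omega>. sc p \<omega> * sc q \<omega>) * mu (sR q \<inter> sR p)"
      using E_PW[OF Q(1) _ Q(2,3) P(2,3) Z Zb, of "sb q" "sb p"] False by (simp add: sR_def)
    then show ?thesis by (simp add: Int_commute mult.commute mult.left_commute)
  qed
qed

lemma simple_single:
  assumes ps: "simple_integrand F ps" and p: "p \<in> set ps"
  shows "integrable M (\<lambda>\<omega>. sc p \<omega> * W (sR p) \<omega>)" "expectation (\<lambda>\<omega>. sc p \<omega> * W (sR p) \<omega>) = 0"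
proof -
  note P = simple_props[OF ps p]
  obtain B1 where B1: "\<And>\<omega>. \<bar>sc p \<omega>\<bar> \<le> B1" using P(5) by auto
  show "integrable M (\<lambda>\<omega>. sc p \<omega> * W (sR p) \<omega>)" using int_VW[OF measF[OF P(4)] B1 P(6)] .
  show "expectation (\<lambda>\<omega>. sc p \<omega> * W (sR p) \<omega>) = 0"
    using E_VW[OF P(6,7) P(4) bdd_int[OF measF[OF P(4)] B1]] .
qed

lemma simple_I:
  assumes ps: "simple_integrand F ps"
  shows "integrable M (simple_stoch_int W ps)" "expectation (simple_stoch_int W ps) = 0"
    "integrable M (\<lambda>\<omega>. (simple_stoch_int W ps \<omega>)\<^sup>2)"
    "expectation (\<lambda>\<omega>. (simple_stoch_int W ps \<omega>)\<^sup>2) =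
      (\<Sum>i<length ps. \<Sum>j<length ps. expectation (\<lambda>\<omega>. sc (ps!i) \<omega> * sc (ps!j) \<omega>) * mu (sR (ps!i) \<inter> sR (ps!j)))"
proof -
  have mem: "i < length ps \<Longrightarrow> ps ! i \<in> set ps" for i by simp
  have eq: "simple_stoch_int W ps = (\<lambda>\<omega>. \<Sum>i<length ps. sc (ps!i) \<omega> * W (sR (ps!i)) \<omega>)"
    by (rule ext) (rule simple_stoch_int_nth)
  show "integrable M (simple_stoch_int W ps)" unfolding eq
    using simple_single(1)[OF ps mem] by auto
  show "expectation (simple_stoch_int W ps) = 0" unfolding eq
    using simple_single[OF ps mem] by (simp add: Bochner_Integration.integral_sum)
  have sq: "(\<lambda>\<omega>. (simple_stoch_int W ps \<omega>)\<^sup>2) = (\<lambda>\<omega>. \<Sum>i<length ps. \<Sum>j<length ps.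
      sc (ps!i) \<omega> * sc (ps!j) \<omega> * W (sR (ps!i)) \<omega> * W (sR (ps!j)) \<omega>)"
    unfolding eq power2_eq_square sum_product by (simp add: ac_simps)
  show "integrable M (\<lambda>\<omega>. (simple_stoch_int W ps \<omega>)\<^sup>2)" unfolding sq
    by (intro Bochner_Integration.integrable_sum simple_pair(1)[OF ps mem mem]) auto
  show "expectation (\<lambda>\<omega>. (simple_stoch_int W ps \<omega>)\<^sup>2) =
      (\<Sum>i<length ps. \<Sum>j<length ps. expectation (\<lambda>\<omega>. sc (ps!i) \<omega> * sc (ps!j) \<omega>) * mu (sR (ps!i) \<inter> sR (ps!j)))"
  proof -
    have "expectation (\<lambda>\<omega>. \<Sum>i<length ps. \<Sum>j<length ps.
      sc (ps!i) \<omega> * sc (ps!j) \<omega> * W (sR (ps!i)) \<omega> * W (sR (ps!j)) \<omega>) =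
      (\<Sum>i<length ps. expectation (\<lambda>\<omega>. \<Sum>j<length ps.
      sc (ps!i) \<omega> * sc (ps!j) \<omega> * W (sR (ps!i)) \<omega> * W (sR (ps!j)) \<omega>))"
      by (rule Bochner_Integration.integral_sum)
        (intro Bochner_Integration.integrable_sum simple_pair(1)[OF ps mem mem], auto)
    also have "\<dots> = (\<Sum>i<length ps. \<Sum>j<length ps. expectation (\<lambda>\<omega>.
      sc (ps!i) \<omega> * sc (ps!j) \<omega> * W (sR (ps!i)) \<omega> * W (sR (ps!j)) \<omega>))"
      by (intro sum.cong refl Bochner_Integration.integral_sum simple_pair(1)[OF ps mem mem]) auto
    also have "\<dots> = (\<Sum>i<length ps. \<Sum>j<length ps. expectation (\<lambda>\<omega>. sc (ps!i) \<omega> * sc (ps!j) \<omega>) * mu (sR (ps!i) \<inter> sR (ps!j)))"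
      by (intro sum.cong refl simple_pair(2)[OF ps mem mem]) auto
    finally show ?thesis unfolding sq .
  qed
qed


lemma simple_meas:
  assumes ps: "simple_integrand F ps"
  shows "(\<lambda>(\<omega>, z). simple_eval ps (fst z) (snd z) \<omega>) \<in> borel_measurable (M \<Otimes>\<^sub>M (lborel \<Otimes>\<^sub>M lborel))"
proof -
  have mem: "i < length ps \<Longrightarrow> ps ! i \<in> set ps" for i by simp
  have eq: "(\<lambda>(\<omega>, z). simple_eval ps (fst z) (snd z) \<omega>) =
    (\<lambda>x. \<Sum>i<length ps. sc (ps!i) (fst x) * indicator (sR (ps!i)) (snd x))"
    by (auto simp: simple_eval_nth)
  have "(\<lambda>x. sc (ps!i) (fst x) * indicator (sR (ps!i)) (snd x)) \<in> borel_measurable (M \<Otimes>\<^sub>M (lborel \<Otimes>\<^sub>M lborel))"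
    if "i < length ps" for i
  proof -
    have m1: "sc (ps!i) \<in> borel_measurable M" using measF[OF simple_props(4)[OF ps mem[OF that]]] .
    have m2: "sR (ps!i) \<in> sets (lborel \<Otimes>\<^sub>M lborel)" using finite_ts_meas[OF simple_props(6)[OF ps mem[OF that]]] .
    show ?thesis using m1 m2 by measurable
  qed
  then show ?thesis unfolding eq by (intro borel_measurable_sum) auto
qed

lemma simple_norm_inner:
  assumes ps: "simple_integrand F ps"
  shows "(\<integral>\<^sup>+ z. indicator ({0..} \<times> UNIV) z * ennreal ((simple_eval ps (fst z) (snd z) \<omega>)\<^sup>2) \<partial>(lborel \<Otimes>\<^sub>M lborel))
     = ennreal (\<Sum>i<length ps. \<Sum>j<length ps. sc (ps!i) \<omega> * sc (ps!j) \<omega> * mu (sR (ps!i) \<inter> sR (ps!j)))"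
    "0 \<le> (\<Sum>i<length ps. \<Sum>j<length ps. sc (ps!i) \<omega> * sc (ps!j) \<omega> * mu (sR (ps!i) \<inter> sR (ps!j)))"
proof -
  have mem: "i < length ps \<Longrightarrow> ps ! i \<in> set ps" for i by simp
  define h where "h z = (\<Sum>i<length ps. sc (ps!i) \<omega> * indicator (sR (ps!i)) z)\<^sup>2" for z :: "real \<times> real"
  have sub: "i < length ps \<Longrightarrow> sR (ps!i) \<subseteq> {0..} \<times> UNIV" for i
    using simple_props(1,7)[OF ps mem] by fastforce
  have p1: "indicator ({0..} \<times> UNIV) z * ennreal ((simple_eval ps (fst z) (snd z) \<omega>)\<^sup>2) = ennreal (h z)" for z
  proof (cases "z \<in> {0..} \<times> UNIV")
    case True then show ?thesis by (simp add: h_def simple_eval_nth)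
  next
    case False
    then have "z \<notin> sR (ps!i)" if "i < length ps" for i using sub[OF that] by auto
    then show ?thesis using False by (simp add: h_def)
  qed
  have h2: "h = (\<lambda>z. \<Sum>i<length ps. \<Sum>j<length ps. (sc (ps!i) \<omega> * sc (ps!j) \<omega>) * indicator (sR (ps!i) \<inter> sR (ps!j)) z)"
    by (rule ext, unfold h_def power2_eq_square sum_product indicator_inter_arith, intro sum.cong refl, simp add: ac_simps)
  have fin: "i < length ps \<Longrightarrow> j < length ps \<Longrightarrow> sR (ps!i) \<inter> sR (ps!j) \<in> sets (lborel \<Otimes>\<^sub>M lborel) \<and>
       emeasure (lborel \<Otimes>\<^sub>M lborel) (sR (ps!i) \<inter> sR (ps!j)) < \<infinity>" for i j
  proof -
    assume "i < length ps" "j < length ps"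
    then have a: "finite_ts_set (sR (ps!i))" "finite_ts_set (sR (ps!j))" using simple_props(6)[OF ps mem] by auto
    have "sR (ps!i) \<inter> sR (ps!j) \<in> sets (lborel \<Otimes>\<^sub>M lborel)"
      by (rule sets.Int[OF finite_ts_meas[OF a(1)] finite_ts_meas[OF a(2)]])
    then have "finite_ts_set (sR (ps!i) \<inter> sR (ps!j))"
      by (rule finite_ts_subset[OF a(1) Int_lower1])
    then show ?thesis by (simp add: finite_ts_set_def)
  qed
  have int: "integrable (lborel \<Otimes>\<^sub>M lborel) h" unfolding h2
    using fin by (intro Bochner_Integration.integrable_sum integrable_mult_right) (auto simp: integrable_indicator_iff)
  have ii: "integrable (lborel \<Otimes>\<^sub>M lborel) (\<lambda>z. (sc (ps!i) \<omega> * sc (ps!j) \<omega>) * indicator (sR (ps!i) \<inter> sR (ps!j)) z)"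
    if "i < length ps" "j < length ps" for i j
    using fin[OF that] by (intro integrable_mult_right) (auto simp: integrable_indicator_iff)
  have ih: "integral\<^sup>L (lborel \<Otimes>\<^sub>M lborel) h = (\<Sum>i<length ps. \<Sum>j<length ps. sc (ps!i) \<omega> * sc (ps!j) \<omega> * mu (sR (ps!i) \<inter> sR (ps!j)))"
    unfolding h2
    apply (subst Bochner_Integration.integral_sum)
     apply (intro Bochner_Integration.integrable_sum ii; simp)
    apply (intro sum.cong refl)
    apply (subst Bochner_Integration.integral_sum)
     apply (intro ii; simp)
    apply (intro sum.cong refl)
    apply (subst integral_mult_right_zero)
    apply (simp add: space_pair_measure)
    done
  have "0 \<le> integral\<^sup>L (lborel \<Otimes>\<^sub>M lborel) h" by (rule Bochner_Integration.integral_nonneg) (simp add: h_def)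
  then show "0 \<le> (\<Sum>i<length ps. \<Sum>j<length ps. sc (ps!i) \<omega> * sc (ps!j) \<omega> * mu (sR (ps!i) \<inter> sR (ps!j)))"
    using ih by simp
  show "(\<integral>\<^sup>+ z. indicator ({0..} \<times> UNIV) z * ennreal ((simple_eval ps (fst z) (snd z) \<omega>)\<^sup>2) \<partial>(lborel \<Otimes>\<^sub>M lborel))
     = ennreal (\<Sum>i<length ps. \<Sum>j<length ps. sc (ps!i) \<omega> * sc (ps!j) \<omega> * mu (sR (ps!i) \<inter> sR (ps!j)))"
    unfolding p1 by (subst nn_integral_eq_integral[OF int]) (auto simp: h_def ih)
qed

lemma simple_iso:
  assumes ps: "simple_integrand F ps"
  shows "L2_norm_sq M (simple_eval ps) = (\<integral>\<^sup>+\<omega>. ennreal ((simple_stoch_int W ps \<omega>)\<^sup>2) \<partial>M)"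
proof -
  have mem: "i < length ps \<Longrightarrow> ps ! i \<in> set ps" for i by simp
  define Q where "Q \<omega> = (\<Sum>i<length ps. \<Sum>j<length ps. sc (ps!i) \<omega> * sc (ps!j) \<omega> * mu (sR (ps!i) \<inter> sR (ps!j)))" for \<omega>
  have cint: "integrable M (\<lambda>\<omega>. sc (ps!i) \<omega> * sc (ps!j) \<omega>)" if "i < length ps" "j < length ps" for i j
  proof -
    note P = simple_props[OF ps mem[OF that(1)]] and R = simple_props[OF ps mem[OF that(2)]]
    obtain B1 where B1: "\<And>\<omega>. \<bar>sc (ps!i) \<omega>\<bar> \<le> B1" using P(5) by auto
    obtain B2 where B2: "\<And>\<omega>. \<bar>sc (ps!j) \<omega>\<bar> \<le> B2" using R(5) by auto
    show ?thesis
    proof (rule bdd_int[where B="B1*B2"])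
      show "(\<lambda>\<omega>. sc (ps!i) \<omega> * sc (ps!j) \<omega>) \<in> borel_measurable M" using measF[OF P(4)] measF[OF R(4)] by simp
      show "\<bar>sc (ps!i) \<omega> * sc (ps!j) \<omega>\<bar> \<le> B1 * B2" for \<omega>
        unfolding abs_mult using B1[of \<omega>] B2[of \<omega>] by (intro mult_mono) auto
    qed
  qed
  have Qint: "integrable M Q" unfolding Q_def
    using cint by (intro Bochner_Integration.integrable_sum integrable_mult_left) auto
  have EQ: "expectation Q = expectation (\<lambda>\<omega>. (simple_stoch_int W ps \<omega>)\<^sup>2)"
    unfolding simple_I(4)[OF ps] Q_def using cint
    by (subst Bochner_Integration.integral_sum, intro Bochner_Integration.integrable_sum integrable_mult_left,
        auto intro!: sum.cong Bochner_Integration.integral_sum)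
  have "L2_norm_sq M (simple_eval ps) = (\<integral>\<^sup>+\<omega>. ennreal (Q \<omega>) \<partial>M)"
    unfolding L2_norm_sq_def Q_def by (simp add: simple_norm_inner[OF ps])
  also have "\<dots> = ennreal (expectation Q)"
    using simple_norm_inner(2)[OF ps] by (intro nn_integral_eq_integral[OF Qint]) (auto simp: Q_def)
  also have "\<dots> = (\<integral>\<^sup>+\<omega>. ennreal ((simple_stoch_int W ps \<omega>)\<^sup>2) \<partial>M)"
    unfolding EQ by (rule nn_integral_eq_integral[symmetric]) (auto simp: simple_I(3)[OF ps])
  finally show ?thesis .
qed

end


lemma sq_split_pt:
  assumes e: "0 < (e::real)"
  shows "ennreal ((x + y)\<^sup>2) \<le> ennreal (1 + e) * ennreal (x\<^sup>2) + ennreal (1 + 1/e) * ennreal (y\<^sup>2)"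
proof -
  have "0 \<le> (e*x - y)\<^sup>2 / e" using e by simp
  also have "(e*x - y)\<^sup>2 / e = e * x\<^sup>2 - 2*x*y + y\<^sup>2 / e" using e
    by (simp add: power2_eq_square field_simps)
  finally have "(x + y)\<^sup>2 \<le> (1 + e) * x\<^sup>2 + (1 + 1/e) * y\<^sup>2"
    by (simp add: power2_eq_square algebra_simps add_divide_distrib)
  moreover have e1: "ennreal ((1+e)*x\<^sup>2) = ennreal (1+e) * ennreal (x\<^sup>2)" using e by (intro ennreal_mult) auto
  moreover have e2: "ennreal ((1+1/e)*y\<^sup>2) = ennreal (1+1/e) * ennreal (y\<^sup>2)" using e by (intro ennreal_mult) auto
  moreover have e3: "ennreal ((1+e)*x\<^sup>2 + (1+1/e)*y\<^sup>2) = ennreal ((1+e)*x\<^sup>2) + ennreal ((1+1/e)*y\<^sup>2)"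
    using e by (intro ennreal_plus) auto
  ultimately show ?thesis by (metis ennreal_leI)
qed

lemma nn_split:
  fixes N :: "'b measure" and w :: "'b \<Rightarrow> ennreal" and g h :: "'b \<Rightarrow> real"
  assumes [measurable]: "w \<in> borel_measurable N" "g \<in> borel_measurable N" "h \<in> borel_measurable N"
    and e: "0 < e"
  shows "(\<integral>\<^sup>+z. w z * ennreal ((g z + h z)\<^sup>2) \<partial>N) \<le>
     ennreal (1 + e) * (\<integral>\<^sup>+z. w z * ennreal ((g z)\<^sup>2) \<partial>N) + ennreal (1 + 1/e) * (\<integral>\<^sup>+z. w z * ennreal ((h z)\<^sup>2) \<partial>N)"
proof -
  have "(\<integral>\<^sup>+z. w z * ennreal ((g z + h z)\<^sup>2) \<partial>N) \<le>
     (\<integral>\<^sup>+z. ennreal (1 + e) * (w z * ennreal ((g z)\<^sup>2)) + ennreal (1 + 1/e) * (w z * ennreal ((h z)\<^sup>2)) \<partial>N)"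
  proof (rule nn_integral_mono)
    fix z
    have "w z * ennreal ((g z + h z)\<^sup>2) \<le> w z * (ennreal (1 + e) * ennreal ((g z)\<^sup>2) + ennreal (1 + 1/e) * ennreal ((h z)\<^sup>2))"
      by (rule mult_left_mono[OF sq_split_pt[OF e]]) simp
    then show "w z * ennreal ((g z + h z)\<^sup>2) \<le> ennreal (1 + e) * (w z * ennreal ((g z)\<^sup>2)) + ennreal (1 + 1/e) * (w z * ennreal ((h z)\<^sup>2))"
      by (simp add: distrib_left ac_simps)
  qed
  also have "\<dots> = ennreal (1 + e) * (\<integral>\<^sup>+z. w z * ennreal ((g z)\<^sup>2) \<partial>N) + ennreal (1 + 1/e) * (\<integral>\<^sup>+z. w z * ennreal ((h z)\<^sup>2) \<partial>N)"
    by (simp add: nn_integral_add nn_integral_cmult)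
  finally show ?thesis .
qed

lemma sigma_finite_LL: "sigma_finite_measure (lborel \<Otimes>\<^sub>M lborel :: (real \<times> real) measure)"
  by (rule sigma_finite_pair_measure) (rule sigma_finite_lborel)+

context wn begin

lemma walsh_props:
  assumes wi: "walsh_integral M F W f Y"
    and fm: "(\<lambda>(\<omega>, z). f (fst z) (snd z) \<omega>) \<in> borel_measurable (M \<Otimes>\<^sub>M (lborel \<Otimes>\<^sub>M lborel))"
  shows "integrable M Y" "expectation Y = 0" "integrable M (\<lambda>\<omega>. (Y \<omega>)\<^sup>2)"
    "L2_norm_sq M f \<le> (\<integral>\<^sup>+\<omega>. ennreal ((Y \<omega>)\<^sup>2) \<partial>M)"
proof -
  interpret LL: sigma_finite_measure "lborel \<Otimes>\<^sub>M lborel :: (real \<times> real) measure" by (rule sigma_finite_LL)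
  obtain ps where ps: "\<And>n. simple_integrand F (ps n)"
    and c1: "(\<lambda>n. L2_norm_sq M (\<lambda>s y \<omega>. f s y \<omega> - simple_eval (ps n) s y \<omega>)) \<longlonglongrightarrow> 0"
    and c2: "(\<lambda>n. \<integral>\<^sup>+ \<omega>. ennreal ((simple_stoch_int W (ps n) \<omega> - Y \<omega>)\<^sup>2) \<partial>M) \<longlonglongrightarrow> 0"
    and Ym[measurable]: "Y \<in> borel_measurable M"
    using wi unfolding walsh_integral_def by blast
  define I where "I n = simple_stoch_int W (ps n)" for n
  have Iint: "integrable M (I n)" "expectation (I n) = 0" "integrable M (\<lambda>\<omega>. (I n \<omega>)\<^sup>2)" for n
    using simple_I[OF ps] by (auto simp: I_def)
  have Im[measurable]: "I n \<in> borel_measurable M" for n using Iint(1) by auto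
  define e where "e n = (\<integral>\<^sup>+\<omega>. ennreal ((I n \<omega> - Y \<omega>)\<^sup>2) \<partial>M)" for n
  have e0: "e \<longlonglongrightarrow> 0" using c2 by (simp add: e_def[abs_def] I_def)
  have dint: "integrable M (\<lambda>\<omega>. (I n \<omega> - Y \<omega>)\<^sup>2)" if "e n < \<infinity>" for n
    using that unfolding integrable_iff_bounded e_def by simp
  have "\<forall>\<^sub>F n in sequentially. e n < 1" using order_tendstoD(2)[OF e0, of 1] by simp
  then obtain n0 where n0: "e n0 < 1" by (auto simp: eventually_sequentially)
  then have "e n0 < \<infinity>" using order.strict_trans[OF n0, of \<infinity>] by simp
  note d0 = dint[OF this]
  show Y2: "integrable M (\<lambda>\<omega>. (Y \<omega>)\<^sup>2)"
  proof (rule Bochner_Integration.integrable_bound)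
    show "integrable M (\<lambda>\<omega>. 2 * (I n0 \<omega>)\<^sup>2 + 2 * (I n0 \<omega> - Y \<omega>)\<^sup>2)" using Iint(3) d0 by auto
    show "(\<lambda>\<omega>. (Y \<omega>)\<^sup>2) \<in> borel_measurable M" by measurable
    show "AE \<omega> in M. norm ((Y \<omega>)\<^sup>2) \<le> norm (2 * (I n0 \<omega>)\<^sup>2 + 2 * (I n0 \<omega> - Y \<omega>)\<^sup>2)"
    proof (rule AE_I2)
      fix \<omega>
      have "(Y \<omega>)\<^sup>2 \<le> 2 * (I n0 \<omega>)\<^sup>2 + 2 * (I n0 \<omega> - Y \<omega>)\<^sup>2"
      proof -
        have "0 \<le> (2 * I n0 \<omega> - Y \<omega>)\<^sup>2" by simp
        then show ?thesis by (simp add: power2_eq_square algebra_simps)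
      qed
      then show "norm ((Y \<omega>)\<^sup>2) \<le> norm (2 * (I n0 \<omega>)\<^sup>2 + 2 * (I n0 \<omega> - Y \<omega>)\<^sup>2)" by simp
    qed
  qed
  show Yint: "integrable M Y" by (rule square_integrable_imp_integrable[OF Ym Y2])
  have le: "ennreal ((expectation Y)\<^sup>2) \<le> e n" for n
  proof (cases "e n < \<infinity>")
    case False then have "e n = \<infinity>" by (simp add: not_less top_unique)
    then show ?thesis by simp
  next
    case True
    have Dint: "integrable M (\<lambda>\<omega>. I n \<omega> - Y \<omega>)" using Iint(1) Yint by auto
    have D2: "integrable M (\<lambda>\<omega>. (I n \<omega> - Y \<omega>)\<^sup>2)" using dint[OF True] .
    have "0 \<le> variance (\<lambda>\<omega>. I n \<omega> - Y \<omega>)" by (rule variance_positive)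
    then have "(expectation (\<lambda>\<omega>. I n \<omega> - Y \<omega>))\<^sup>2 \<le> expectation (\<lambda>\<omega>. (I n \<omega> - Y \<omega>)\<^sup>2)"
      using variance_eq[OF Dint D2] by simp
    moreover have "expectation (\<lambda>\<omega>. I n \<omega> - Y \<omega>) = - expectation Y"
      using Iint(1,2) Yint by simp
    moreover have "e n = ennreal (expectation (\<lambda>\<omega>. (I n \<omega> - Y \<omega>)\<^sup>2))"
      unfolding e_def by (rule nn_integral_eq_integral[OF D2]) auto
    ultimately show ?thesis by (simp add: ennreal_leI)
  qed
  have "ennreal ((expectation Y)\<^sup>2) \<le> 0" using LIMSEQ_le_const[OF e0] le by blast
  then show "expectation Y = 0" by simp
  define Q where "Q = (\<integral>\<^sup>+\<omega>. ennreal ((Y \<omega>)\<^sup>2) \<partial>M)"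
  have Qfin: "Q < \<infinity>" using Y2 unfolding Q_def integrable_iff_bounded by simp
  define d where "d n = L2_norm_sq M (\<lambda>s y \<omega>. f s y \<omega> - simple_eval (ps n) s y \<omega>)" for n
  have d0: "d \<longlonglongrightarrow> 0" using c1 by (simp add: d_def[abs_def])
  have sm[measurable]: "(\<lambda>(\<omega>, z). simple_eval (ps n) (fst z) (snd z) \<omega>) \<in> borel_measurable (M \<Otimes>\<^sub>M (lborel \<Otimes>\<^sub>M lborel))" for n
    using simple_meas[OF ps] .
  note fm[measurable]
  have key: "L2_norm_sq M f \<le> ennreal (1 + \<epsilon>) * (ennreal (1 + \<epsilon>) * Q)" if \<epsilon>: "0 < \<epsilon>" for \<epsilon>
  proof -
    have A: "L2_norm_sq M f \<le> ennreal (1 + \<epsilon>) * L2_norm_sq M (simple_eval (ps n)) + ennreal (1 + 1/\<epsilon>) * d n" for n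
    proof -
      let ?s = "\<lambda>\<omega> z. simple_eval (ps n) (fst z) (snd z) \<omega>"
      let ?g = "\<lambda>\<omega> z. f (fst z) (snd z) \<omega> - simple_eval (ps n) (fst z) (snd z) \<omega>"
      let ?w = "indicator ({0..} \<times> UNIV) :: real \<times> real \<Rightarrow> ennreal"
      have "L2_norm_sq M f = (\<integral>\<^sup>+\<omega>. (\<integral>\<^sup>+z. ?w z * ennreal ((?s \<omega> z + ?g \<omega> z)\<^sup>2) \<partial>(lborel \<Otimes>\<^sub>M lborel)) \<partial>M)"
        unfolding L2_norm_sq_def by simp
      also have "\<dots> \<le> (\<integral>\<^sup>+\<omega>. ennreal (1 + \<epsilon>) * (\<integral>\<^sup>+z. ?w z * ennreal ((?s \<omega> z)\<^sup>2) \<partial>(lborel \<Otimes>\<^sub>M lborel))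
          + ennreal (1 + 1/\<epsilon>) * (\<integral>\<^sup>+z. ?w z * ennreal ((?g \<omega> z)\<^sup>2) \<partial>(lborel \<Otimes>\<^sub>M lborel)) \<partial>M)"
      proof (rule nn_integral_mono)
        fix \<omega> assume \<omega>: "\<omega> \<in> space M"
        have m1: "?s \<omega> \<in> borel_measurable (lborel \<Otimes>\<^sub>M lborel)" using \<omega> by measurable
        have m2: "?g \<omega> \<in> borel_measurable (lborel \<Otimes>\<^sub>M lborel)" using \<omega> by measurable
        show "(\<integral>\<^sup>+z. ?w z * ennreal ((?s \<omega> z + ?g \<omega> z)\<^sup>2) \<partial>(lborel \<Otimes>\<^sub>M lborel)) \<le>
          ennreal (1 + \<epsilon>) * (\<integral>\<^sup>+z. ?w z * ennreal ((?s \<omega> z)\<^sup>2) \<partial>(lborel \<Otimes>\<^sub>M lborel))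
          + ennreal (1 + 1/\<epsilon>) * (\<integral>\<^sup>+z. ?w z * ennreal ((?g \<omega> z)\<^sup>2) \<partial>(lborel \<Otimes>\<^sub>M lborel))"
          by (rule nn_split[OF _ m1 m2 \<epsilon>]) simp
      qed
      also have "\<dots> = ennreal (1 + \<epsilon>) * (\<integral>\<^sup>+\<omega>. (\<integral>\<^sup>+z. ?w z * ennreal ((?s \<omega> z)\<^sup>2) \<partial>(lborel \<Otimes>\<^sub>M lborel)) \<partial>M)
          + ennreal (1 + 1/\<epsilon>) * (\<integral>\<^sup>+\<omega>. (\<integral>\<^sup>+z. ?w z * ennreal ((?g \<omega> z)\<^sup>2) \<partial>(lborel \<Otimes>\<^sub>M lborel)) \<partial>M)"
        by (subst nn_integral_add) (auto simp: nn_integral_cmult)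
      also have "\<dots> = ennreal (1 + \<epsilon>) * L2_norm_sq M (simple_eval (ps n)) + ennreal (1 + 1/\<epsilon>) * d n"
        unfolding L2_norm_sq_def d_def by simp
      finally show ?thesis .
    qed
    have B: "L2_norm_sq M (simple_eval (ps n)) \<le> ennreal (1 + \<epsilon>) * Q + ennreal (1 + 1/\<epsilon>) * e n" for n
    proof -
      have "L2_norm_sq M (simple_eval (ps n)) = (\<integral>\<^sup>+\<omega>. 1 * ennreal ((Y \<omega> + (I n \<omega> - Y \<omega>))\<^sup>2) \<partial>M)"
        unfolding simple_iso[OF ps] I_def by simp
      also have "\<dots> \<le> ennreal (1 + \<epsilon>) * (\<integral>\<^sup>+\<omega>. 1 * ennreal ((Y \<omega>)\<^sup>2) \<partial>M) + ennreal (1 + 1/\<epsilon>) * (\<integral>\<^sup>+\<omega>. 1 * ennreal ((I n \<omega> - Y \<omega>)\<^sup>2) \<partial>M)"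
        by (rule nn_split[OF _ _ _ \<epsilon>]) auto
      finally show ?thesis by (simp add: Q_def e_def)
    qed
    have R: "L2_norm_sq M f \<le> ennreal (1 + \<epsilon>) * (ennreal (1 + \<epsilon>) * Q + ennreal (1 + 1/\<epsilon>) * e n) + ennreal (1 + 1/\<epsilon>) * d n" for n
      using order.trans[OF A add_right_mono[OF mult_left_mono[OF B]]] by simp
    have "(\<lambda>n. ennreal (1 + \<epsilon>) * (ennreal (1 + \<epsilon>) * Q + ennreal (1 + 1/\<epsilon>) * e n) + ennreal (1 + 1/\<epsilon>) * d n)
      \<longlonglongrightarrow> ennreal (1 + \<epsilon>) * (ennreal (1 + \<epsilon>) * Q + ennreal (1 + 1/\<epsilon>) * 0) + ennreal (1 + 1/\<epsilon>) * 0"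
      by (intro tendsto_add ennreal_tendsto_cmult tendsto_const e0 d0) auto
    from LIMSEQ_le_const[OF this] R show ?thesis by auto
  qed
  define c where "c k = ennreal (1 + inverse (real (Suc k)))" for k
  have c1: "c \<longlonglongrightarrow> 1"
    unfolding c_def using tendsto_ennrealI[OF tendsto_add[OF tendsto_const LIMSEQ_inverse_real_of_nat, of 1]]
    by simp
  have "(\<lambda>k. c k * (c k * Q)) \<longlonglongrightarrow> 1 * (1 * Q)"
    using Qfin by (intro tendsto_mult_ennreal c1 tendsto_const) auto
  moreover have "L2_norm_sq M f \<le> c k * (c k * Q)" for k unfolding c_def by (rule key) simp
  ultimately show "L2_norm_sq M f \<le> (\<integral>\<^sup>+\<omega>. ennreal ((Y \<omega>)\<^sup>2) \<partial>M)"
    using LIMSEQ_le_const by (force simp: Q_def)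
qed

end


lemma sigma_meas: "\<exists>K. K-lipschitz_on UNIV \<sigma> \<Longrightarrow> (\<sigma>::real\<Rightarrow>real) \<in> borel_measurable borel"
  by (metis borel_measurable_continuous_onI lipschitz_on_continuous_on)

context wn begin

lemma pred_meas:
  assumes pu: "predictable M F u"
  shows "(\<lambda>(\<omega>, z). indicator {0..} (fst z) * u (fst z) (snd z) \<omega>) \<in> borel_measurable (M \<Otimes>\<^sub>M (lborel \<Otimes>\<^sub>M lborel))"
proof -
  define \<Omega> where "\<Omega> = {0::real..} \<times> (UNIV::real set) \<times> space M"
  define N where "N = (lborel \<Otimes>\<^sub>M (lborel \<Otimes>\<^sub>M M) :: (real \<times> real \<times> 'a) measure)"
  have \<Omega>N: "\<Omega> \<in> sets N" unfolding \<Omega>_def N_def by (intro pair_measureI) auto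
  have spN: "space N = UNIV \<times> UNIV \<times> space M" by (simp add: N_def space_pair_measure)
  have \<Omega>sub: "\<Omega> \<subseteq> space N" unfolding spN \<Omega>_def by auto
  have \<Omega>N': "\<Omega> \<inter> space N \<in> sets N" using \<Omega>N \<Omega>sub by (simp add: Int_absorb2)
  define G :: "(real \<times> real \<times> 'a) set set" where "G = {{a<..b} \<times> A \<times> B | a b A B. 0 \<le> a \<and> a \<le> b \<and> A \<in> sets borel \<and> B \<in> sets (F a)} \<union>
      {{0} \<times> A \<times> B | A B. A \<in> sets borel \<and> B \<in> sets (F 0)}"
  have GX: "X \<subseteq> \<Omega> \<and> X \<in> sets N" if X: "X \<in> G" for X
  proof -
    from X consider (a) a b A B where "X = {a<..b} \<times> A \<times> B" "0 \<le> a" "A \<in> sets borel" "B \<in> sets (F a)"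
      | (b) A B where "X = {0} \<times> A \<times> B" "A \<in> sets borel" "B \<in> sets (F 0)"
      unfolding G_def by blast
    then show ?thesis
    proof cases
      case a
      have B: "B \<in> sets M" using a(4) Fsub by blast
      then have "B \<subseteq> space M" by (rule sets.sets_into_space)
      then have "X \<subseteq> \<Omega>" using a(1,2) unfolding \<Omega>_def by auto
      moreover have AB: "A \<times> B \<in> sets (lborel \<Otimes>\<^sub>M M)" using a(3) B by (intro pair_measureI) auto
      have "{a<..b} \<times> (A \<times> B) \<in> sets (lborel \<Otimes>\<^sub>M (lborel \<Otimes>\<^sub>M M))" by (rule pair_measureI[OF _ AB]) simp
      then have "X \<in> sets N" unfolding N_def a(1) .
      ultimately show ?thesis by blast
    next
      case b
      have B: "B \<in> sets M" using b(3) Fsub by blast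
      then have "B \<subseteq> space M" by (rule sets.sets_into_space)
      then have "X \<subseteq> \<Omega>" using b(1) unfolding \<Omega>_def by auto
      moreover have AB: "A \<times> B \<in> sets (lborel \<Otimes>\<^sub>M M)" using b(2) B by (intro pair_measureI) auto
      have "{0} \<times> (A \<times> B) \<in> sets (lborel \<Otimes>\<^sub>M (lborel \<Otimes>\<^sub>M M))" by (rule pair_measureI[OF _ AB]) simp
      then have "X \<in> sets N" unfolding N_def b(1) .
      ultimately show ?thesis by blast
    qed
  qed
  have GP: "G \<subseteq> Pow \<Omega>" using GX by blast
  have GS: "G \<subseteq> sets (restrict_space N \<Omega>)"
  proof
    fix X assume X: "X \<in> G"
    show "X \<in> sets (restrict_space N \<Omega>)"
      using GX[OF X] by (subst sets_restrict_space_iff[OF \<Omega>N']) blast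
  qed
  have spR: "space (restrict_space N \<Omega>) = \<Omega>" using \<Omega>sub by (auto simp: space_restrict_space)
  have sP: "sets (predictable_sa M F) = sigma_sets \<Omega> G"
    unfolding predictable_sa_def G_def[symmetric] \<Omega>_def[symmetric] using GP by (rule sets_measure_of)
  have spP: "space (predictable_sa M F) = \<Omega>"
    unfolding predictable_sa_def G_def[symmetric] \<Omega>_def[symmetric] using GP by (rule space_measure_of)
  have PS: "sets (predictable_sa M F) \<subseteq> sets (restrict_space N \<Omega>)"
    unfolding sP using sets.sigma_sets_subset[OF GS] spR by simp
  have m1: "(\<lambda>(t, x, \<omega>). u t x \<omega>) \<in> borel_measurable (restrict_space N \<Omega>)"
    using pu unfolding predictable_def
    using measurable_mono[of borel borel "predictable_sa M F" "restrict_space N \<Omega>"] PS spR spP by auto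
  have m2: "(\<lambda>p. indicator \<Omega> p *\<^sub>R (\<lambda>(t, x, \<omega>). u t x \<omega>) p) \<in> borel_measurable N"
    using borel_measurable_restrict_space_iff[OF \<Omega>N', THEN iffD1, OF m1] .
  have m3: "(\<lambda>(\<omega>, z). (fst z, snd z, \<omega>)) \<in> measurable (M \<Otimes>\<^sub>M (lborel \<Otimes>\<^sub>M lborel)) N"
    unfolding N_def by measurable
  have "(\<lambda>q. (\<lambda>p. indicator \<Omega> p *\<^sub>R (\<lambda>(t, x, \<omega>). u t x \<omega>) p) ((\<lambda>(\<omega>, z). (fst z, snd z, \<omega>)) q))
      \<in> borel_measurable (M \<Otimes>\<^sub>M (lborel \<Otimes>\<^sub>M lborel))"
    by (rule measurable_compose[OF m3 m2])
  then show ?thesis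
  proof (rule measurable_cong[THEN iffD1, rotated])
    fix q :: "'a \<times> real \<times> real" assume "q \<in> space (M \<Otimes>\<^sub>M (lborel \<Otimes>\<^sub>M lborel))"
    then obtain \<omega> z where q: "q = (\<omega>, z)" "\<omega> \<in> space M" by (auto simp: space_pair_measure)
    show "(\<lambda>p. indicator \<Omega> p *\<^sub>R (\<lambda>(t, x, \<omega>). u t x \<omega>) p) ((\<lambda>(\<omega>, z). (fst z, snd z, \<omega>)) q) =
       (\<lambda>(\<omega>, z). indicator {0..} (fst z) * u (fst z) (snd z) \<omega>) q"
      using q by (auto simp: \<Omega>_def indicator_def)
  qed
qed


lemma PL: "pair_sigma_finite M (lborel \<Otimes>\<^sub>M lborel :: (real \<times> real) measure)"
  unfolding pair_sigma_finite_def using sigma_finite_LL by (simp add: sigma_finite_measure_axioms)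

lemma main_ineq:
  assumes sol: "mild_solution M F W \<kappa> \<sigma> u0 u" and sm[measurable]: "\<sigma> \<in> borel_measurable borel"
    and sig: "\<And>y. L * \<bar>y\<bar> \<le> \<bar>\<sigma> y\<bar>" and L: "0 \<le> L" and t: "0 < t"
  shows "ennreal ((heat_semigroup \<kappa> t u0 x)\<^sup>2) \<le> (\<integral>\<^sup>+\<omega>. ennreal ((u t x \<omega>)\<^sup>2) \<partial>M)"
    "(\<integral>\<^sup>+z. ennreal (L\<^sup>2 * indicator {0..t} (fst z) * (heat_kernel \<kappa> (t - fst z) (snd z - x))\<^sup>2) *
        (\<integral>\<^sup>+\<omega>. ennreal ((indicator {0..} (fst z) * u (fst z) (snd z) \<omega>)\<^sup>2) \<partial>M) \<partial>(lborel \<Otimes>\<^sub>M lborel))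
      \<le> (\<integral>\<^sup>+\<omega>. ennreal ((u t x \<omega>)\<^sup>2) \<partial>M)"
proof -
  interpret PL: pair_sigma_finite M "lborel \<Otimes>\<^sub>M lborel :: (real \<times> real) measure" by (rule PL)
  define c where "c = heat_semigroup \<kappa> t u0 x"
  define f where "f = (\<lambda>s y \<omega>. indicator {0..t} s * heat_kernel \<kappa> (t - s) (y - x) * \<sigma> (u s y \<omega>))"
  obtain Y where Y: "walsh_integral M F W f Y" "AE \<omega> in M. u t x \<omega> = c + Y \<omega>"
    using sol t unfolding mild_solution_def f_def c_def by blast
  have pu: "predictable M F u" using sol by (simp add: mild_solution_def)
  define ut where "ut = (\<lambda>(\<omega>, z). indicator {0..} (fst z) * u (fst z) (snd z) \<omega>)"
  have utm[measurable]: "ut \<in> borel_measurable (M \<Otimes>\<^sub>M (lborel \<Otimes>\<^sub>M lborel))"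
    unfolding ut_def by (rule pred_meas[OF pu])
  have feq: "(\<lambda>(\<omega>, z). f (fst z) (snd z) \<omega>) =
     (\<lambda>q. indicator {0..t} (fst (snd q)) * heat_kernel \<kappa> (t - fst (snd q)) (snd (snd q) - x) * \<sigma> (ut q))"
    by (auto simp: f_def ut_def indicator_def fun_eq_iff)
  have fm: "(\<lambda>(\<omega>, z). f (fst z) (snd z) \<omega>) \<in> borel_measurable (M \<Otimes>\<^sub>M (lborel \<Otimes>\<^sub>M lborel))"
    unfolding feq heat_kernel_def by measurable
  note WP = walsh_props[OF Y(1) fm]
  have Ym: "Y \<in> borel_measurable M" using WP(1) by auto
  have i2: "integrable M (\<lambda>\<omega>. (c + Y \<omega>)\<^sup>2)"
  proof -
    have "(\<lambda>\<omega>. (c + Y \<omega>)\<^sup>2) = (\<lambda>\<omega>. c\<^sup>2 + 2 * c * Y \<omega> + (Y \<omega>)\<^sup>2)" by (simp add: power2_sum fun_eq_iff)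
    then show ?thesis using WP(1,3) by simp
  qed
  have Eu: "(\<integral>\<^sup>+\<omega>. ennreal ((u t x \<omega>)\<^sup>2) \<partial>M) = ennreal (c\<^sup>2 + expectation (\<lambda>\<omega>. (Y \<omega>)\<^sup>2))"
  proof -
    have "(\<integral>\<^sup>+\<omega>. ennreal ((u t x \<omega>)\<^sup>2) \<partial>M) = (\<integral>\<^sup>+\<omega>. ennreal ((c + Y \<omega>)\<^sup>2) \<partial>M)"
      by (rule nn_integral_cong_AE) (use Y(2) in auto)
    also have "\<dots> = ennreal (expectation (\<lambda>\<omega>. (c + Y \<omega>)\<^sup>2))"
      by (rule nn_integral_eq_integral[OF i2]) auto
    also have "expectation (\<lambda>\<omega>. (c + Y \<omega>)\<^sup>2) = c\<^sup>2 + expectation (\<lambda>\<omega>. (Y \<omega>)\<^sup>2)"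
    proof -
      have "(\<lambda>\<omega>. (c + Y \<omega>)\<^sup>2) = (\<lambda>\<omega>. c\<^sup>2 + 2 * c * Y \<omega> + (Y \<omega>)\<^sup>2)" by (simp add: power2_sum fun_eq_iff)
      then show ?thesis using WP(1,2,3) by (simp add: prob_space)
    qed
    finally show ?thesis .
  qed
  have EY: "(\<integral>\<^sup>+\<omega>. ennreal ((Y \<omega>)\<^sup>2) \<partial>M) = ennreal (expectation (\<lambda>\<omega>. (Y \<omega>)\<^sup>2))"
    by (rule nn_integral_eq_integral[OF WP(3)]) auto
  have EY0: "0 \<le> expectation (\<lambda>\<omega>. (Y \<omega>)\<^sup>2)" by (rule Bochner_Integration.integral_nonneg) simp
  show "ennreal ((heat_semigroup \<kappa> t u0 x)\<^sup>2) \<le> (\<integral>\<^sup>+\<omega>. ennreal ((u t x \<omega>)\<^sup>2) \<partial>M)"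
    unfolding Eu c_def[symmetric] using EY0 by (intro ennreal_leI) simp
  define K where "K z = L\<^sup>2 * indicator {0..t} (fst z) * (heat_kernel \<kappa> (t - fst z) (snd z - x))\<^sup>2" for z :: "real \<times> real"
  have K0: "0 \<le> K z" for z by (simp add: K_def)
  have Km[measurable]: "K \<in> borel_measurable (lborel \<Otimes>\<^sub>M lborel)" unfolding K_def heat_kernel_def by measurable
  have "(\<integral>\<^sup>+z. ennreal (K z) * (\<integral>\<^sup>+\<omega>. ennreal ((ut (\<omega>, z))\<^sup>2) \<partial>M) \<partial>(lborel \<Otimes>\<^sub>M lborel))
      = (\<integral>\<^sup>+z. (\<integral>\<^sup>+\<omega>. ennreal (K z) * ennreal ((ut (\<omega>, z))\<^sup>2) \<partial>M) \<partial>(lborel \<Otimes>\<^sub>M lborel))"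
    by (intro nn_integral_cong nn_integral_cmult[symmetric]) measurable
  also have "\<dots> = (\<integral>\<^sup>+\<omega>. (\<integral>\<^sup>+z. ennreal (K z) * ennreal ((ut (\<omega>, z))\<^sup>2) \<partial>(lborel \<Otimes>\<^sub>M lborel)) \<partial>M)"
    by (rule PL.Fubini') measurable
  also have "\<dots> \<le> L2_norm_sq M f"
    unfolding L2_norm_sq_def
  proof (intro nn_integral_mono)
    fix \<omega> z
    show "ennreal (K z) * ennreal ((ut (\<omega>, z))\<^sup>2) \<le> indicator ({0..} \<times> UNIV) z * ennreal ((f (fst z) (snd z) \<omega>)\<^sup>2)"
    proof (cases "fst z \<in> {0..t}")
      case False then show ?thesis by (simp add: K_def)
    next
      case True
      then have z0: "z \<in> {0..} \<times> UNIV" by (cases z) auto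
      define v where "v = u (fst z) (snd z) \<omega>"
      define h where "h = heat_kernel \<kappa> (t - fst z) (snd z - x)"
      have "(L * \<bar>v\<bar>)\<^sup>2 \<le> \<bar>\<sigma> v\<bar>\<^sup>2" using sig[of v] L by (intro power_mono) auto
      then have a: "L\<^sup>2 * v\<^sup>2 \<le> (\<sigma> v)\<^sup>2" by (simp add: power_mult_distrib)
      have "h\<^sup>2 * (L\<^sup>2 * v\<^sup>2) \<le> h\<^sup>2 * (\<sigma> v)\<^sup>2" by (rule mult_left_mono[OF a]) simp
      moreover have "K z * (ut (\<omega>, z))\<^sup>2 = h\<^sup>2 * (L\<^sup>2 * v\<^sup>2)"
        using True by (simp add: K_def ut_def v_def h_def)
      moreover have "(f (fst z) (snd z) \<omega>)\<^sup>2 = h\<^sup>2 * (\<sigma> v)\<^sup>2"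
        using True by (simp add: f_def v_def h_def power_mult_distrib)
      ultimately have "K z * (ut (\<omega>, z))\<^sup>2 \<le> (f (fst z) (snd z) \<omega>)\<^sup>2" by simp
      then show ?thesis using z0 K0[of z] by (simp add: ennreal_mult[symmetric] ennreal_leI)
    qed
  qed
  also have "\<dots> \<le> (\<integral>\<^sup>+\<omega>. ennreal ((Y \<omega>)\<^sup>2) \<partial>M)" by (rule WP(4))
  also have "\<dots> \<le> (\<integral>\<^sup>+\<omega>. ennreal ((u t x \<omega>)\<^sup>2) \<partial>M)" unfolding Eu EY by (intro ennreal_leI) simp
  finally show "(\<integral>\<^sup>+z. ennreal (L\<^sup>2 * indicator {0..t} (fst z) * (heat_kernel \<kappa> (t - fst z) (snd z - x))\<^sup>2) *
        (\<integral>\<^sup>+\<omega>. ennreal ((indicator {0..} (fst z) * u (fst z) (snd z) \<omega>)\<^sup>2) \<partial>M) \<partial>(lborel \<Otimes>\<^sub>M lborel))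
      \<le> (\<integral>\<^sup>+\<omega>. ennreal ((u t x \<omega>)\<^sup>2) \<partial>M)"
    by (simp add: K_def ut_def)
qed

end


lemma lsc_meas: assumes "lsc f" shows "f \<in> borel_measurable borel"
proof (rule borel_measurableI_greater)
  fix c
  have "open {x. c < f x}"
  proof (rule open_subopen[THEN iffD2], intro ballI)
    fix x assume x: "x \<in> {x. c < f x}"
    then have "\<forall>\<^sub>F y in at x. c < f y" using assms unfolding lsc_def by blast
    then obtain S where S: "open S" "x \<in> S" "\<forall>y\<in>S. y \<noteq> x \<longrightarrow> c < f y"
      unfolding eventually_at_topological by blast
    have "S \<subseteq> {x. c < f x}" using S(3) x by (metis (mono_tags, lifting) mem_Collect_eq subsetI)
    then show "\<exists>T. open T \<and> x \<in> T \<and> T \<subseteq> {x. c < f x}" using S(1,2) by blast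
  qed
  then show "{x \<in> space borel. c < f x} \<in> sets borel" by simp
qed

lemma hk0: "heat_kernel \<kappa> 0 z = 0" by (simp add: heat_kernel_def)
lemma hk_even: "heat_kernel \<kappa> t (- z) = heat_kernel \<kappa> t z" by (simp add: heat_kernel_def)

lemma hk_normal: assumes "0 < \<kappa>" "0 < t" shows "heat_kernel \<kappa> t z = normal_density 0 (sqrt (\<kappa> * t)) z"
proof -
  have "(sqrt (\<kappa> * t))\<^sup>2 = \<kappa> * t" using assms by simp
  then show ?thesis by (simp add: heat_kernel_def normal_density_def ac_simps del: real_sqrt_mult)
qed

lemma hk_pos: "0 < \<kappa> \<Longrightarrow> 0 < t \<Longrightarrow> 0 < heat_kernel \<kappa> t z"
  by (simp add: hk_normal normal_density_pos)

lemma hk_sq: assumes "0 < \<kappa>" "0 < t"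
  shows "(heat_kernel \<kappa> t z)\<^sup>2 = exp (- z\<^sup>2 / (\<kappa> * t)) / (2 * pi * \<kappa> * t)"
proof -
  have "(exp (- z\<^sup>2 / (2 * \<kappa> * t)))\<^sup>2 = exp (- z\<^sup>2 / (2 * \<kappa> * t) + - z\<^sup>2 / (2 * \<kappa> * t))"
    by (simp only: power2_eq_square exp_add)
  also have "- z\<^sup>2 / (2 * \<kappa> * t) + - z\<^sup>2 / (2 * \<kappa> * t) = - z\<^sup>2 / (\<kappa> * t)" by simp
  finally have "(exp (- z\<^sup>2 / (2 * \<kappa> * t)))\<^sup>2 = exp (- z\<^sup>2 / (\<kappa> * t))" .
  moreover have "(sqrt (2 * pi * \<kappa> * t))\<^sup>2 = 2 * pi * \<kappa> * t" using assms by simp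
  ultimately show ?thesis by (simp add: heat_kernel_def power_divide)
qed

lemma L_sigma_lb:
  assumes lip: "\<exists>K. K-lipschitz_on UNIV \<sigma>" and s0: "\<sigma> 0 = 0"
  shows "L_sigma \<sigma> * \<bar>y\<bar> \<le> \<bar>\<sigma> y\<bar>"
proof (cases "y = 0")
  case True then show ?thesis using s0 by simp
next
  case False
  have "L_sigma \<sigma> \<le> \<bar>\<sigma> y / y\<bar>" unfolding L_sigma_def
  proof (rule cInf_lower)
    show "\<bar>\<sigma> y / y\<bar> \<in> {\<bar>\<sigma> x / x\<bar> |x. x \<noteq> 0}" using False by auto
    show "bdd_below {\<bar>\<sigma> x / x\<bar> |x. x \<noteq> 0}" by (rule bdd_belowI[of _ 0]) auto
  qed
  then have "L_sigma \<sigma> * \<bar>y\<bar> \<le> \<bar>\<sigma> y / y\<bar> * \<bar>y\<bar>" by (rule mult_right_mono) simp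
  also have "\<dots> = \<bar>\<sigma> y\<bar>" using False by (simp add: abs_divide)
  finally show ?thesis .
qed

lemma L_sigma_nonneg: "(\<exists>K. K-lipschitz_on UNIV \<sigma>) \<Longrightarrow> 0 \<le> L_sigma \<sigma>"
  unfolding L_sigma_def by (rule cInf_greatest) auto

lemma arctan_ge: assumes "0 \<le> x" shows "x / (1 + x\<^sup>2) \<le> arctan x"
proof (cases "x = 0")
  case True then show ?thesis by simp
next
  case False
  then have x: "0 < x" using assms by simp
  obtain z where z: "0 < z" "z < x" "arctan x - arctan 0 = (x - 0) * inverse (1 + z\<^sup>2)"
    using MVT2[OF x, of arctan "\<lambda>y. inverse (1 + y\<^sup>2)"] DERIV_arctan by blast
  have "1 + z\<^sup>2 \<le> 1 + x\<^sup>2" using z by (intro add_left_mono power_mono) auto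
  then have "inverse (1 + x\<^sup>2) \<le> inverse (1 + z\<^sup>2)"
    by (rule le_imp_inverse_le) (use zero_le_power2[of z] in linarith)
  then have "x * inverse (1 + x\<^sup>2) \<le> x * inverse (1 + z\<^sup>2)" using x by (intro mult_left_mono) auto
  then show ?thesis using z(3) unfolding divide_inverse by simp
qed

lemma semigroup_pos:
  assumes k: "0 < \<kappa>" and t: "0 < t" and nn: "\<And>y. 0 \<le> u0 y" and m[measurable]: "u0 \<in> borel_measurable borel"
    and b: "bounded (range u0)" and pos: "emeasure lborel {y. u0 y > 0} > 0"
  shows "0 < heat_semigroup \<kappa> t u0 x"
proof -
  obtain B where B: "\<And>y. \<bar>u0 y\<bar> \<le> B" using b unfolding bounded_iff by auto
  define s where "s = sqrt (\<kappa> * t)"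
  have s: "0 < s" using k t by (simp add: s_def)
  have hk: "heat_kernel \<kappa> t (y - x) = normal_density x s y" for y
    using hk_normal[OF k t, of "y - x"] by (simp add: s_def normal_density_def power2_commute)
  define g where "g y = normal_density x s y * u0 y" for y
  have gm[measurable]: "g \<in> borel_measurable lborel" unfolding g_def by measurable
  have gi: "integrable lborel g"
  proof (rule Bochner_Integration.integrable_bound[where f="\<lambda>y. B * normal_density x s y"])
    show "integrable lborel (\<lambda>y. B * normal_density x s y)" using integrable_normal_density[OF s] by simp
    show "g \<in> borel_measurable lborel" by simp
    show "AE y in lborel. norm (g y) \<le> norm (B * normal_density x s y)"
    proof (rule AE_I2)
      fix y
      have "normal_density x s y * \<bar>u0 y\<bar> \<le> normal_density x s y * B"
        by (rule mult_left_mono[OF B]) simp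
      moreover have "0 \<le> B" using B[of y] by simp
      ultimately show "norm (g y) \<le> norm (B * normal_density x s y)"
        by (simp add: g_def abs_mult mult.commute)
    qed
  qed
  have eq: "heat_semigroup \<kappa> t u0 x = integral\<^sup>L lborel g"
    unfolding heat_semigroup_def g_def hk ..
  have g0: "0 \<le> g y" for y unfolding g_def using nn[of y] by simp
  have "integral\<^sup>L lborel g \<noteq> 0"
  proof
    assume "integral\<^sup>L lborel g = 0"
    then have "AE y in lborel. g y = 0" using integral_nonneg_eq_0_iff_AE[OF gi] g0 by simp
    then have "AE y in lborel. \<not> (u0 y > 0)"
    proof eventually_elim
      fix y assume "g y = 0"
      then show "\<not> (u0 y > 0)" using normal_density_pos[OF s, of x y] by (auto simp: g_def)
    qed
    then have "emeasure lborel {y \<in> space lborel. u0 y > 0} = 0"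
      by (subst AE_iff_measurable[symmetric, where P="\<lambda>y. \<not> (u0 y > 0)"]) auto
    then show False using pos by simp
  qed
  moreover have "0 \<le> integral\<^sup>L lborel g" by (rule Bochner_Integration.integral_nonneg) (simp add: g0)
  ultimately show ?thesis unfolding eq by simp
qed

lemma exp_int:
  assumes a: "0 < a"
  shows "(\<integral>\<^sup>+r. indicator {0<..} r * ennreal (exp (- a * r)) \<partial>lborel) = ennreal (1 / a)"
proof -
  have "(\<integral>\<^sup>+r. indicator {0<..} r * ennreal (exp (- a * r)) \<partial>lborel) =
        (\<integral>\<^sup>+r. ennreal (exp (- a * r)) * indicator {0..} r \<partial>lborel)"
    by (rule nn_integral_cong_AE) (use AE_lborel_singleton[of 0] in \<open>auto simp: indicator_def\<close>)
  also have "\<dots> = ennreal (0 - (- exp (- a * 0) / a))"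
  proof (rule nn_integral_FTC_atLeast)
    show "(\<lambda>r. exp (- a * r)) \<in> borel_measurable borel" by measurable
    show "DERIV (\<lambda>r. - exp (- a * r) / a) x :> exp (- a * x)" for x
      using a by (auto intro!: derivative_eq_intros)
    show "\<And>x. 0 \<le> x \<Longrightarrow> 0 \<le> exp (- a * x)" by simp
    have "LIM r at_top. exp (a * r) :> at_top"
      by (rule filterlim_compose[OF exp_at_top filterlim_tendsto_pos_mult_at_top[OF tendsto_const a filterlim_ident]])
    then have "((\<lambda>r. inverse (exp (a * r))) \<longlongrightarrow> 0) at_top" by (rule tendsto_inverse_0_at_top)
    then have "((\<lambda>r. - (inverse (exp (a * r))) / a) \<longlongrightarrow> - 0 / a) at_top"
      by (intro tendsto_divide tendsto_minus tendsto_const) (use a in auto)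
    then show "((\<lambda>r. - exp (- a * r) / a) \<longlongrightarrow> 0) at_top" by (simp add: exp_minus)
  qed
  finally show ?thesis by simp
qed

lemma atan_int:
  assumes b: "0 < b"
  shows "(\<integral>\<^sup>+w. ennreal (1 / (b\<^sup>2 + w\<^sup>2)) * indicator {\<alpha>..} w \<partial>lborel) = ennreal (pi / (2 * b) - arctan (\<alpha> / b) / b)"
proof (rule nn_integral_FTC_atLeast)
  show "(\<lambda>w. 1 / (b\<^sup>2 + w\<^sup>2)) \<in> borel_measurable borel" by measurable
  show "DERIV (\<lambda>w. arctan (w / b) / b) x :> 1 / (b\<^sup>2 + x\<^sup>2)" for x
  proof -
    have "DERIV (\<lambda>w. arctan (w / b) / b) x :> inverse (1 + (x / b)\<^sup>2) * (1 / b) / b"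
      by (intro derivative_eq_intros DERIV_arctan) (use b in auto)
    moreover have "inverse (1 + (x / b)\<^sup>2) * (1 / b) / b = 1 / (b\<^sup>2 + x\<^sup>2)"
    proof -
      have "b\<^sup>2 + x\<^sup>2 \<noteq> 0" using b by (metis add_pos_nonneg zero_le_power2 zero_less_power less_irrefl)
      moreover have "0 < b * (b * b) + b * (x * x)" using b by (intro add_pos_nonneg) auto
      ultimately show ?thesis using b by (simp add: field_simps power2_eq_square)
    qed
    ultimately show ?thesis by simp
  qed
  show "\<And>x. \<alpha> \<le> x \<Longrightarrow> 0 \<le> 1 / (b\<^sup>2 + x\<^sup>2)" by (simp add: add_nonneg_nonneg)
  have "LIM w at_top. (1 / b) * w :> at_top"
    by (rule filterlim_tendsto_pos_mult_at_top[OF tendsto_const _ filterlim_ident]) (use b in simp)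
  then have "((\<lambda>w. arctan ((1 / b) * w)) \<longlongrightarrow> pi / 2) at_top"
    by (rule filterlim_compose[OF tendsto_arctan_at_top])
  then have "((\<lambda>w. arctan ((1 / b) * w) / b) \<longlongrightarrow> pi / 2 / b) at_top"
    by (intro tendsto_divide tendsto_const) (use b in auto)
  then show "((\<lambda>w. arctan (w / b) / b) \<longlongrightarrow> pi / (2 * b)) at_top" by simp
qed


definition kf :: "real \<Rightarrow> real \<Rightarrow> real \<Rightarrow> real \<Rightarrow> real \<times> real \<Rightarrow> real" where
  "kf L \<kappa> \<alpha> \<beta> q = (if 0 \<le> fst q \<and> \<alpha> * fst q \<le> snd q
     then L\<^sup>2 * exp (- \<beta> * fst q) * (heat_kernel \<kappa> (fst q) (snd q))\<^sup>2 else 0)"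

lemma kf_meas[measurable]: "kf L \<kappa> \<alpha> \<beta> \<in> borel_measurable (lborel \<Otimes>\<^sub>M lborel)"
  unfolding kf_def heat_kernel_def by measurable

lemma kf_nonneg: "0 \<le> kf L \<kappa> \<alpha> \<beta> q" by (simp add: kf_def)

lemma kf_inner:
  assumes k: "0 < \<kappa>" and r: "0 < r"
  shows "(\<integral>\<^sup>+z. ennreal (kf L \<kappa> \<alpha> \<beta> (r, z)) \<partial>lborel) =
     (\<integral>\<^sup>+w. ennreal (L\<^sup>2 / (2 * pi * \<kappa>) * exp (- (\<beta> + w\<^sup>2 / \<kappa>) * r)) * indicator {\<alpha>..} w \<partial>lborel)"
proof -
  have m: "(\<lambda>z. ennreal (kf L \<kappa> \<alpha> \<beta> (r, z))) \<in> borel_measurable borel" by measurable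
  have "(\<integral>\<^sup>+z. ennreal (kf L \<kappa> \<alpha> \<beta> (r, z)) \<partial>lborel) = ennreal \<bar>r\<bar> * (\<integral>\<^sup>+w. ennreal (kf L \<kappa> \<alpha> \<beta> (r, 0 + r * w)) \<partial>lborel)"
    using nn_integral_real_affine[OF m, of r 0] r by simp
  also have "\<dots> = (\<integral>\<^sup>+w. ennreal r * ennreal (kf L \<kappa> \<alpha> \<beta> (r, r * w)) \<partial>lborel)"
    using r by (subst nn_integral_cmult) auto
  also have "\<dots> = (\<integral>\<^sup>+w. ennreal (L\<^sup>2 / (2 * pi * \<kappa>) * exp (- (\<beta> + w\<^sup>2 / \<kappa>) * r)) * indicator {\<alpha>..} w \<partial>lborel)"
  proof (rule nn_integral_cong)
    fix w :: real
    have "r * kf L \<kappa> \<alpha> \<beta> (r, r * w) = (if \<alpha> \<le> w then L\<^sup>2 / (2 * pi * \<kappa>) * exp (- (\<beta> + w\<^sup>2 / \<kappa>) * r) else 0)"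
    proof (cases "\<alpha> \<le> w")
      case True
      then have c: "0 \<le> r \<and> \<alpha> * r \<le> r * w" using r by (simp add: mult.commute mult_left_mono)
      have e: "exp (- \<beta> * r) * exp (- (r * w)\<^sup>2 / (\<kappa> * r)) = exp (- (\<beta> + w\<^sup>2 / \<kappa>) * r)"
        unfolding exp_add[symmetric] using r k by (simp add: power2_eq_square field_simps)
      have "r * (L\<^sup>2 * exp (- \<beta> * r) * (exp (- (r * w)\<^sup>2 / (\<kappa> * r)) / (2 * pi * \<kappa> * r))) =
          L\<^sup>2 / (2 * pi * \<kappa>) * (exp (- \<beta> * r) * exp (- (r * w)\<^sup>2 / (\<kappa> * r)))"
        using r k by (simp add: field_simps)
      then show ?thesis using True c e by (simp add: kf_def hk_sq[OF k r])
    next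
      case False
      then have "\<not> (\<alpha> * r \<le> r * w)" using r by (simp add: mult.commute)
      then show ?thesis using False by (simp add: kf_def)
    qed
    moreover have "ennreal r * ennreal (kf L \<kappa> \<alpha> \<beta> (r, r * w)) = ennreal (r * kf L \<kappa> \<alpha> \<beta> (r, r * w))"
      using r kf_nonneg[of L \<kappa> \<alpha> \<beta> "(r, r * w)"] by (simp add: ennreal_mult)
    ultimately show "ennreal r * ennreal (kf L \<kappa> \<alpha> \<beta> (r, r * w)) =
      ennreal (L\<^sup>2 / (2 * pi * \<kappa>) * exp (- (\<beta> + w\<^sup>2 / \<kappa>) * r)) * indicator {\<alpha>..} w"
      by (simp add: indicator_def)
  qed
  finally show ?thesis .
qed

lemma kappa_real:
  assumes k: "0 < \<kappa>" and a: "0 < \<alpha>" and b: "0 < \<beta>" and cond: "\<alpha>\<^sup>2 + \<kappa> * \<beta> < \<alpha> * L\<^sup>2 / (2 * pi)"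
  shows "1 < L\<^sup>2 / (2 * pi) * (pi / (2 * sqrt (\<kappa> * \<beta>)) - arctan (\<alpha> / sqrt (\<kappa> * \<beta>)) / sqrt (\<kappa> * \<beta>))"
proof -
  define c where "c = sqrt (\<kappa> * \<beta>)"
  have c: "0 < c" using k b by (simp add: c_def)
  have c2: "c\<^sup>2 = \<kappa> * \<beta>" using k b by (simp add: c_def)
  define y where "y = \<alpha> / c"
  have y: "0 < y" using a c by (simp add: y_def)
  have "arctan (1 / y) = pi / 2 - arctan y" using arctan_inverse[OF y] unfolding inverse_eq_divide .
  moreover have "(1 / y) / (1 + (1 / y)\<^sup>2) \<le> arctan (1 / y)" using y by (intro arctan_ge) simp
  moreover have "(1 / y) / (1 + (1 / y)\<^sup>2) = y / (y\<^sup>2 + 1)" using y by (simp add: field_simps power2_eq_square)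
  ultimately have "y / (y\<^sup>2 + 1) \<le> pi / 2 - arctan y" by simp
  then have "y / (y\<^sup>2 + 1) / c \<le> (pi / 2 - arctan y) / c" by (rule divide_right_mono) (use c in auto)
  moreover have "y / (y\<^sup>2 + 1) / c = \<alpha> / (\<alpha>\<^sup>2 + \<kappa> * \<beta>)"
  proof -
    have D: "0 < \<alpha>\<^sup>2 + c\<^sup>2" using a c by (intro add_pos_pos) auto
    have e1: "(\<alpha> / c)\<^sup>2 + 1 = (\<alpha>\<^sup>2 + c\<^sup>2) / c\<^sup>2" using c by (simp add: field_simps power2_eq_square)
    have "(\<alpha> / c) / ((\<alpha>\<^sup>2 + c\<^sup>2) / c\<^sup>2) / c = (\<alpha> / c) * (c\<^sup>2 / (\<alpha>\<^sup>2 + c\<^sup>2)) / c" by simp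
    also have "\<dots> = \<alpha> / (\<alpha>\<^sup>2 + c\<^sup>2)" using c D by (simp add: power2_eq_square)
    finally show ?thesis unfolding y_def e1 c2 .
  qed
  moreover have "(pi / 2 - arctan y) / c = pi / (2 * c) - arctan (\<alpha> / c) / c" using c
    by (simp add: y_def field_simps)
  ultimately have le: "\<alpha> / (\<alpha>\<^sup>2 + \<kappa> * \<beta>) \<le> pi / (2 * c) - arctan (\<alpha> / c) / c" by simp
  have pos: "0 < \<alpha>\<^sup>2 + \<kappa> * \<beta>" using a k b by (simp add: add_pos_pos)
  have "L\<^sup>2 / (2 * pi) * (\<alpha> / (\<alpha>\<^sup>2 + \<kappa> * \<beta>)) = (\<alpha> * L\<^sup>2 / (2 * pi)) / (\<alpha>\<^sup>2 + \<kappa> * \<beta>)" by simp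
  moreover have "1 < (\<alpha> * L\<^sup>2 / (2 * pi)) / (\<alpha>\<^sup>2 + \<kappa> * \<beta>)"
    using cond pos by (subst less_divide_eq_1_pos) auto
  ultimately have "1 < L\<^sup>2 / (2 * pi) * (\<alpha> / (\<alpha>\<^sup>2 + \<kappa> * \<beta>))" by (simp add: mult.commute)
  also have "\<dots> \<le> L\<^sup>2 / (2 * pi) * (pi / (2 * c) - arctan (\<alpha> / c) / c)"
    by (rule mult_left_mono[OF le]) simp
  finally show ?thesis by (simp add: c_def)
qed

lemma kappa_bound:
  assumes k: "0 < \<kappa>" and a: "0 < \<alpha>" and b: "0 < \<beta>" and cond: "\<alpha>\<^sup>2 + \<kappa> * \<beta> < \<alpha> * L\<^sup>2 / (2 * pi)"
  shows "1 < (\<integral>\<^sup>+q. ennreal (kf L \<kappa> \<alpha> \<beta> q) \<partial>(lborel \<Otimes>\<^sub>M lborel))"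
proof -
  define A where "A = L\<^sup>2 / (2 * pi * \<kappa>)"
  have A0: "0 \<le> A" using k by (simp add: A_def)
  define c where "c = sqrt (\<kappa> * \<beta>)"
  have c: "0 < c" using k b by (simp add: c_def)
  have c2: "c\<^sup>2 = \<kappa> * \<beta>" using k b by (simp add: c_def)
  define H where "H r w = indicator {0<..} r * (ennreal (A * exp (- (\<beta> + w\<^sup>2 / \<kappa>) * r)) * indicator {\<alpha>..} w)" for r w :: real
  have Hm: "case_prod H \<in> borel_measurable (lborel \<Otimes>\<^sub>M lborel)" unfolding H_def by measurable
  have "(\<integral>\<^sup>+q. ennreal (kf L \<kappa> \<alpha> \<beta> q) \<partial>(lborel \<Otimes>\<^sub>M lborel)) = (\<integral>\<^sup>+r. \<integral>\<^sup>+z. ennreal (kf L \<kappa> \<alpha> \<beta> (r, z)) \<partial>lborel \<partial>lborel)"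
    by (rule lborel.nn_integral_fst[symmetric]) measurable
  also have "\<dots> \<ge> (\<integral>\<^sup>+r. \<integral>\<^sup>+w. H r w \<partial>lborel \<partial>lborel)"
  proof (rule nn_integral_mono)
    fix r :: real
    show "(\<integral>\<^sup>+w. H r w \<partial>lborel) \<le> (\<integral>\<^sup>+z. ennreal (kf L \<kappa> \<alpha> \<beta> (r, z)) \<partial>lborel)"
    proof (cases "0 < r")
      case True then show ?thesis unfolding kf_inner[OF k True] by (simp add: H_def A_def)
    next
      case False then show ?thesis by (simp add: H_def)
    qed
  qed
  also have "(\<integral>\<^sup>+r. \<integral>\<^sup>+w. H r w \<partial>lborel \<partial>lborel) = (\<integral>\<^sup>+w. \<integral>\<^sup>+r. H r w \<partial>lborel \<partial>lborel)"
    by (rule lborel_pair.Fubini'[OF Hm, symmetric])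
  also have "\<dots> = (\<integral>\<^sup>+w. ennreal (L\<^sup>2 / (2 * pi)) * (ennreal (1 / (c\<^sup>2 + w\<^sup>2)) * indicator {\<alpha>..} w) \<partial>lborel)"
  proof (rule nn_integral_cong)
    fix w :: real
    have ap: "0 < \<beta> + w\<^sup>2 / \<kappa>" using b k by (simp add: add_pos_nonneg)
    have "(\<integral>\<^sup>+r. H r w \<partial>lborel) = (\<integral>\<^sup>+r. (ennreal A * indicator {\<alpha>..} w) * (indicator {0<..} r * ennreal (exp (- (\<beta> + w\<^sup>2 / \<kappa>) * r))) \<partial>lborel)"
      unfolding H_def using A0 by (intro nn_integral_cong) (simp add: ennreal_mult ac_simps)
    also have "\<dots> = (ennreal A * indicator {\<alpha>..} w) * (\<integral>\<^sup>+r. indicator {0<..} r * ennreal (exp (- (\<beta> + w\<^sup>2 / \<kappa>) * r)) \<partial>lborel)"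
      by (rule nn_integral_cmult) simp
    also have "\<dots> = (ennreal A * indicator {\<alpha>..} w) * ennreal (1 / (\<beta> + w\<^sup>2 / \<kappa>))"
      by (simp only: exp_int[OF ap])
    also have "\<dots> = ennreal (L\<^sup>2 / (2 * pi)) * (ennreal (1 / (c\<^sup>2 + w\<^sup>2)) * indicator {\<alpha>..} w)"
    proof -
      have "A * (1 / (\<beta> + w\<^sup>2 / \<kappa>)) = L\<^sup>2 / (2 * pi) * (1 / (c\<^sup>2 + w\<^sup>2))"
      proof -
        define X where "X = \<kappa> * \<beta> + w\<^sup>2"
        have X: "0 < X" using k b by (simp add: add_pos_nonneg X_def)
        have "\<beta> + w\<^sup>2 / \<kappa> = X / \<kappa>" using k by (simp add: field_simps X_def)
        then have e: "1 / (\<beta> + w\<^sup>2 / \<kappa>) = \<kappa> / X" by simp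
        have "L\<^sup>2 / (2 * pi * \<kappa>) * (\<kappa> / X) = L\<^sup>2 / (2 * pi) * (1 / X)"
          using k X by (simp add: field_simps)
        then show ?thesis unfolding e X_def A_def c2 .
      qed
      moreover have "0 \<le> 1 / (\<beta> + w\<^sup>2 / \<kappa>)" using ap by simp
      ultimately show ?thesis using A0
        by (simp add: ennreal_mult[symmetric] ac_simps indicator_def)
    qed
    finally show "(\<integral>\<^sup>+r. H r w \<partial>lborel) = ennreal (L\<^sup>2 / (2 * pi)) * (ennreal (1 / (c\<^sup>2 + w\<^sup>2)) * indicator {\<alpha>..} w)" .
  qed
  also have "\<dots> = ennreal (L\<^sup>2 / (2 * pi)) * ennreal (pi / (2 * c) - arctan (\<alpha> / c) / c)"
    by (subst nn_integral_cmult) (auto simp: atan_int[OF c])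
  also have "\<dots> = ennreal (L\<^sup>2 / (2 * pi) * (pi / (2 * c) - arctan (\<alpha> / c) / c))"
    by (rule ennreal_mult'[symmetric]) simp
  finally have ge: "ennreal (L\<^sup>2 / (2 * pi) * (pi / (2 * c) - arctan (\<alpha> / c) / c)) \<le>
      (\<integral>\<^sup>+q. ennreal (kf L \<kappa> \<alpha> \<beta> q) \<partial>(lborel \<Otimes>\<^sub>M lborel))" .
  have "1 < ennreal (L\<^sup>2 / (2 * pi) * (pi / (2 * c) - arctan (\<alpha> / c) / c))"
    using kappa_real[OF k a b cond] by (simp add: c_def)
  then show ?thesis using ge by (rule less_le_trans)
qed


lemma trans_LL:
  fixes h :: "real \<times> real \<Rightarrow> ennreal"
  assumes h: "h \<in> borel_measurable (lborel \<Otimes>\<^sub>M lborel)"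
  shows "(\<integral>\<^sup>+q. h q \<partial>(lborel \<Otimes>\<^sub>M lborel)) = (\<integral>\<^sup>+q. h (w + q) \<partial>(lborel \<Otimes>\<^sub>M lborel))"
proof -
  have hb: "h \<in> borel_measurable borel" using h by (simp add: lborel_prod)
  have "(\<integral>\<^sup>+q. h q \<partial>(lborel \<Otimes>\<^sub>M lborel)) = (\<integral>\<^sup>+q. h q \<partial>(distr lborel borel ((+) w)))"
    by (simp add: lborel_prod lborel_distr_plus)
  also have "\<dots> = (\<integral>\<^sup>+q. h (w + q) \<partial>lborel)"
    by (rule nn_integral_distr) (auto simp: hb)
  finally show ?thesis by (simp add: lborel_prod)
qed

lemma refl_LL:
  fixes h :: "real \<times> real \<Rightarrow> ennreal"
  assumes h[measurable]: "h \<in> borel_measurable (lborel \<Otimes>\<^sub>M lborel)"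
  shows "(\<integral>\<^sup>+q. h (fst q, - snd q) \<partial>(lborel \<Otimes>\<^sub>M lborel)) = (\<integral>\<^sup>+q. h q \<partial>(lborel \<Otimes>\<^sub>M lborel))"
proof -
  have "(\<integral>\<^sup>+q. h (fst q, - snd q) \<partial>(lborel \<Otimes>\<^sub>M lborel)) = (\<integral>\<^sup>+r. \<integral>\<^sup>+z. h (r, - z) \<partial>lborel \<partial>lborel)"
    by (rule lborel.nn_integral_fst[symmetric, where f="\<lambda>q. h (fst q, - snd q)", simplified]) measurable
  also have "\<dots> = (\<integral>\<^sup>+r. \<integral>\<^sup>+z. h (r, z) \<partial>lborel \<partial>lborel)"
  proof (rule nn_integral_cong)
    fix r :: real
    have m: "(\<lambda>z. h (r, z)) \<in> borel_measurable borel" by measurable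
    show "(\<integral>\<^sup>+z. h (r, - z) \<partial>lborel) = (\<integral>\<^sup>+z. h (r, z) \<partial>lborel)"
      using nn_integral_real_affine[OF m, of "-1" 0] by simp
  qed
  also have "\<dots> = (\<integral>\<^sup>+q. h q \<partial>(lborel \<Otimes>\<^sub>M lborel))"
    by (rule lborel.nn_integral_fst[where f=h, simplified]) measurable
  finally show ?thesis .
qed

lemma ennreal_contract:
  fixes I c :: ennreal
  assumes "I < \<infinity>" "1 < c" "c * I \<le> I"
  shows "I = 0"
proof (rule ccontr)
  assume I0: "I \<noteq> 0"
  obtain i where i: "I = ennreal i" "0 \<le> i" using assms(1) by (cases I) auto
  have ip: "0 < i" using I0 i by (auto simp: not_less)
  show False
  proof (cases "c = \<infinity>")
    case True
    then have "c * I = \<infinity>" using I0 by (simp add: ennreal_mult_eq_top_iff)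
    then show False using assms(1,3) by (simp add: top_unique)
  next
    case False
    then obtain d where d: "c = ennreal d" "0 \<le> d" by (cases c) auto
    have d1: "1 < d" using assms(2) d by simp
    have "ennreal (d * i) \<le> ennreal i" using assms(3) d i by (simp add: ennreal_mult)
    then have "d * i \<le> i" using i by (auto simp: ennreal_le_iff2)
    then show False using d1 ip by (simp add: mult_le_cancel_right1 not_le)
  qed
qed

definition Cf :: "real \<Rightarrow> real \<Rightarrow> bool \<Rightarrow> real \<times> real \<Rightarrow> real" where
  "Cf \<alpha> \<beta> strict z = (if (if strict then 0 < fst z else 0 \<le> fst z) \<and> \<alpha> * fst z \<le> \<bar>snd z\<bar> then exp (- \<beta> * fst z) else 0)"

definition Kf :: "real \<Rightarrow> real \<Rightarrow> real \<times> real \<Rightarrow> real \<times> real \<Rightarrow> real" where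
  "Kf L \<kappa> z w = L\<^sup>2 * indicator {0..fst z} (fst w) * (heat_kernel \<kappa> (fst z - fst w) (snd w - snd z))\<^sup>2"

lemma Cf_nonneg: "0 \<le> Cf \<alpha> \<beta> b z" by (simp add: Cf_def)
lemma Kf_nonneg: "0 \<le> Kf L \<kappa> z w" by (simp add: Kf_def)

lemma pw1:
  assumes a: "0 < \<alpha>" and s: "0 \<le> s" and y: "\<alpha> * s \<le> y"
  shows "exp (- \<beta> * s) * kf L \<kappa> \<alpha> \<beta> q \<le> Cf \<alpha> \<beta> True ((s, y) + q) * Kf L \<kappa> ((s, y) + q) (s, y)"
proof (cases "kf L \<kappa> \<alpha> \<beta> q = 0")
  case True then show ?thesis using Cf_nonneg Kf_nonneg by simp
next
  case False
  obtain r z where q: "q = (r, z)" by (cases q)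
  have r0: "0 \<le> r" and rz: "\<alpha> * r \<le> z" and kv: "kf L \<kappa> \<alpha> \<beta> q = L\<^sup>2 * exp (- \<beta> * r) * (heat_kernel \<kappa> r z)\<^sup>2"
    using False by (auto simp: kf_def q split: if_splits)
  have r: "0 < r"
  proof (rule ccontr)
    assume "\<not> 0 < r" then have "r = 0" using r0 by simp
    then have "kf L \<kappa> \<alpha> \<beta> q = 0" by (simp add: kf_def q hk0)
    then show False using False by simp
  qed
  have "\<alpha> * (s + r) \<le> \<bar>y + z\<bar>" using y rz by (simp add: distrib_left)
  then have C: "Cf \<alpha> \<beta> True ((s, y) + q) = exp (- \<beta> * (s + r))" using s r by (simp add: Cf_def q)
  have K: "Kf L \<kappa> ((s, y) + q) (s, y) = L\<^sup>2 * (heat_kernel \<kappa> r z)\<^sup>2"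
    using s r hk_even[of \<kappa> r z] by (simp add: Kf_def q)
  have "exp (- \<beta> * (s + r)) = exp (- \<beta> * s) * exp (- \<beta> * r)" by (simp add: exp_add[symmetric] algebra_simps)
  then show ?thesis unfolding C K kv by (simp add: ac_simps)
qed

lemma pw2:
  assumes a: "0 < \<alpha>" and s: "0 \<le> s" and y: "\<alpha> * s \<le> - y"
  shows "exp (- \<beta> * s) * kf L \<kappa> \<alpha> \<beta> (fst q, - snd q) \<le> Cf \<alpha> \<beta> True ((s, y) + q) * Kf L \<kappa> ((s, y) + q) (s, y)"
proof (cases "kf L \<kappa> \<alpha> \<beta> (fst q, - snd q) = 0")
  case True then show ?thesis using Cf_nonneg Kf_nonneg by simp
next
  case False
  obtain r z where q: "q = (r, z)" by (cases q)
  have r0: "0 \<le> r" and rz: "\<alpha> * r \<le> - z" and kv: "kf L \<kappa> \<alpha> \<beta> (fst q, - snd q) = L\<^sup>2 * exp (- \<beta> * r) * (heat_kernel \<kappa> r (- z))\<^sup>2"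
    using False by (auto simp: kf_def q split: if_splits)
  have r: "0 < r"
  proof (rule ccontr)
    assume "\<not> 0 < r" then have "r = 0" using r0 by simp
    then have "kf L \<kappa> \<alpha> \<beta> (fst q, - snd q) = 0" by (simp add: kf_def q hk0)
    then show False using False by simp
  qed
  have "\<alpha> * (s + r) \<le> \<bar>y + z\<bar>" using y rz by (simp add: distrib_left)
  then have C: "Cf \<alpha> \<beta> True ((s, y) + q) = exp (- \<beta> * (s + r))" using s r by (simp add: Cf_def q)
  have K: "Kf L \<kappa> ((s, y) + q) (s, y) = L\<^sup>2 * (heat_kernel \<kappa> r (- z))\<^sup>2"
    using s r by (simp add: Kf_def q)
  have "exp (- \<beta> * (s + r)) = exp (- \<beta> * s) * exp (- \<beta> * r)" by (simp add: exp_add[symmetric] algebra_simps)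
  then show ?thesis unfolding C K kv by (simp add: ac_simps)
qed

lemma Cf_meas[measurable]: "Cf \<alpha> \<beta> b \<in> borel_measurable (lborel \<Otimes>\<^sub>M lborel)"
  unfolding Cf_def by measurable

lemma ind_Icc: "indicator {0..a} b = (if 0 \<le> b \<and> b \<le> a then 1 else (0::real))"
  by (simp add: indicator_def)

lemma Kf_meas[measurable]: "(\<lambda>p. Kf L \<kappa> (fst p) (snd p)) \<in> borel_measurable ((lborel \<Otimes>\<^sub>M lborel) \<Otimes>\<^sub>M (lborel \<Otimes>\<^sub>M lborel))"
  unfolding Kf_def heat_kernel_def ind_Icc by measurable

lemma Kf_meas1: "(\<lambda>z. Kf L \<kappa> z w) \<in> borel_measurable (lborel \<Otimes>\<^sub>M lborel)"
  unfolding Kf_def heat_kernel_def ind_Icc by measurable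

lemma Kf_meas2: "(\<lambda>w. Kf L \<kappa> z w) \<in> borel_measurable (lborel \<Otimes>\<^sub>M lborel)"
  unfolding Kf_def heat_kernel_def ind_Icc by measurable

lemma Jbound:
  assumes a: "0 < \<alpha>" and s: "0 \<le> s" and sy: "\<alpha> * s \<le> \<bar>y\<bar>"
  shows "ennreal (exp (- \<beta> * s)) * (\<integral>\<^sup>+q. ennreal (kf L \<kappa> \<alpha> \<beta> q) \<partial>(lborel \<Otimes>\<^sub>M lborel)) \<le>
    (\<integral>\<^sup>+z. ennreal (Cf \<alpha> \<beta> True z * Kf L \<kappa> z (s, y)) \<partial>(lborel \<Otimes>\<^sub>M lborel))"
proof -
  have hm: "(\<lambda>z. ennreal (Cf \<alpha> \<beta> True z * Kf L \<kappa> z (s, y))) \<in> borel_measurable (lborel \<Otimes>\<^sub>M lborel)"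
    using Kf_meas1[of L \<kappa> "(s, y)"] by measurable
  have R: "(\<integral>\<^sup>+z. ennreal (Cf \<alpha> \<beta> True z * Kf L \<kappa> z (s, y)) \<partial>(lborel \<Otimes>\<^sub>M lborel)) =
     (\<integral>\<^sup>+q. ennreal (Cf \<alpha> \<beta> True ((s, y) + q) * Kf L \<kappa> ((s, y) + q) (s, y)) \<partial>(lborel \<Otimes>\<^sub>M lborel))"
    by (rule trans_LL[OF hm])
  show ?thesis
  proof (cases "0 \<le> y")
    case True
    then have y: "\<alpha> * s \<le> y" using sy by simp
    have "ennreal (exp (- \<beta> * s)) * (\<integral>\<^sup>+q. ennreal (kf L \<kappa> \<alpha> \<beta> q) \<partial>(lborel \<Otimes>\<^sub>M lborel)) =
        (\<integral>\<^sup>+q. ennreal (exp (- \<beta> * s) * kf L \<kappa> \<alpha> \<beta> q) \<partial>(lborel \<Otimes>\<^sub>M lborel))"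
      by (subst nn_integral_cmult[symmetric]) (auto simp: ennreal_mult kf_nonneg intro!: nn_integral_cong)
    also have "\<dots> \<le> (\<integral>\<^sup>+q. ennreal (Cf \<alpha> \<beta> True ((s, y) + q) * Kf L \<kappa> ((s, y) + q) (s, y)) \<partial>(lborel \<Otimes>\<^sub>M lborel))"
      by (intro nn_integral_mono ennreal_leI pw1[OF a s y])
    finally show ?thesis unfolding R .
  next
    case False
    then have y: "\<alpha> * s \<le> - y" using sy by simp
    have "(\<integral>\<^sup>+q. ennreal (kf L \<kappa> \<alpha> \<beta> q) \<partial>(lborel \<Otimes>\<^sub>M lborel)) =
        (\<integral>\<^sup>+q. ennreal (kf L \<kappa> \<alpha> \<beta> (fst q, - snd q)) \<partial>(lborel \<Otimes>\<^sub>M lborel))"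
      by (rule refl_LL[where h="\<lambda>q. ennreal (kf L \<kappa> \<alpha> \<beta> q)", symmetric]) measurable
    then have "ennreal (exp (- \<beta> * s)) * (\<integral>\<^sup>+q. ennreal (kf L \<kappa> \<alpha> \<beta> q) \<partial>(lborel \<Otimes>\<^sub>M lborel)) =
        ennreal (exp (- \<beta> * s)) * (\<integral>\<^sup>+q. ennreal (kf L \<kappa> \<alpha> \<beta> (fst q, - snd q)) \<partial>(lborel \<Otimes>\<^sub>M lborel))"
      by (rule arg_cong)
    also have "\<dots> = (\<integral>\<^sup>+q. ennreal (exp (- \<beta> * s)) * ennreal (kf L \<kappa> \<alpha> \<beta> (fst q, - snd q)) \<partial>(lborel \<Otimes>\<^sub>M lborel))"
      by (rule nn_integral_cmult[symmetric]) measurable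
    also have "\<dots> = (\<integral>\<^sup>+q. ennreal (exp (- \<beta> * s) * kf L \<kappa> \<alpha> \<beta> (fst q, - snd q)) \<partial>(lborel \<Otimes>\<^sub>M lborel))"
      by (intro nn_integral_cong) (simp add: ennreal_mult kf_nonneg)
    also have "\<dots> \<le> (\<integral>\<^sup>+q. ennreal (Cf \<alpha> \<beta> True ((s, y) + q) * Kf L \<kappa> ((s, y) + q) (s, y)) \<partial>(lborel \<Otimes>\<^sub>M lborel))"
      by (intro nn_integral_mono ennreal_leI pw2[OF a s y])
    finally show ?thesis unfolding R .
  qed
qed

lemma PLL: "pair_sigma_finite (lborel \<Otimes>\<^sub>M lborel :: (real \<times> real) measure) (lborel \<Otimes>\<^sub>M lborel :: (real \<times> real) measure)"
  unfolding pair_sigma_finite_def using sigma_finite_LL by simp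

context wn begin

lemma final:
  assumes kappa_pos: "\<kappa> > 0" and sigma_lip: "\<exists>K. K-lipschitz_on UNIV \<sigma>" and sigma_zero: "\<sigma> 0 = 0"
    and u0_nonneg: "\<forall>x. u0 x \<ge> 0" and u0_bounded: "bounded (range u0)" and u0_lsc: "lsc u0"
    and u0_pos: "emeasure lborel {x. u0 x > 0} > 0" and sol: "mild_solution M F W \<kappa> \<sigma> u0 u"
    and a: "\<alpha> > 0" and b: "\<beta> > 0" and cond: "\<alpha>\<^sup>2 + \<kappa> * \<beta> < \<alpha> * (L_sigma \<sigma>)\<^sup>2 / (2 * pi)"
  shows "M_norm M \<alpha> \<beta> u = \<infinity>"
proof -
  interpret LL2: pair_sigma_finite "lborel \<Otimes>\<^sub>M lborel :: (real \<times> real) measure" "lborel \<Otimes>\<^sub>M lborel :: (real \<times> real) measure"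
    by (rule PLL)
  define L where "L = L_sigma \<sigma>"
  have sm[measurable]: "\<sigma> \<in> borel_measurable borel" using sigma_meas[OF sigma_lip] .
  have lb: "\<And>y. L * \<bar>y\<bar> \<le> \<bar>\<sigma> y\<bar>" unfolding L_def using L_sigma_lb[OF sigma_lip sigma_zero] .
  have L0: "0 \<le> L" unfolding L_def using L_sigma_nonneg[OF sigma_lip] .
  have u0m[measurable]: "u0 \<in> borel_measurable borel" using lsc_meas[OF u0_lsc] .
  have pu: "predictable M F u" using sol by (simp add: mild_solution_def)
  have utm: "(\<lambda>(\<omega>, z). indicator {0..} (fst z) * u (fst z) (snd z) \<omega>) \<in> borel_measurable (M \<Otimes>\<^sub>M (lborel \<Otimes>\<^sub>M lborel))"
    using pred_meas[OF pu] .
  define G where "G z = (\<integral>\<^sup>+\<omega>. ennreal ((indicator {0..} (fst z) * u (fst z) (snd z) \<omega>)\<^sup>2) \<partial>M)" for z :: "real \<times> real"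
  have Gm[measurable]: "G \<in> borel_measurable (lborel \<Otimes>\<^sub>M lborel)"
  proof -
    have "(\<lambda>(z, \<omega>). ennreal ((indicator {0..} (fst z) * u (fst z) (snd z) \<omega>)\<^sup>2)) \<in> borel_measurable ((lborel \<Otimes>\<^sub>M lborel) \<Otimes>\<^sub>M M)"
      using utm by (subst measurable_pair_swap_iff) (simp add: case_prod_beta')
    then show ?thesis unfolding G_def[abs_def] by (rule borel_measurable_nn_integral)
  qed
  define FF where "FF t x = (\<integral>\<^sup>+\<omega>. ennreal ((u t x \<omega>)\<^sup>2) \<partial>M)" for t x
  have GF: "0 \<le> t \<Longrightarrow> G (t, x) = FF t x" for t x by (simp add: G_def FF_def)
  have MI1: "0 < t \<Longrightarrow> ennreal ((heat_semigroup \<kappa> t u0 x)\<^sup>2) \<le> FF t x" for t x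
    unfolding FF_def by (rule main_ineq(1)[OF sol sm lb L0])
  have MI2: "0 < t \<Longrightarrow> (\<integral>\<^sup>+w. ennreal (Kf L \<kappa> (t, x) w) * G w \<partial>(lborel \<Otimes>\<^sub>M lborel)) \<le> FF t x" for t x
    unfolding FF_def Kf_def G_def fst_conv snd_conv by (rule main_ineq(2)[OF sol sm lb L0])
  define IC where "IC = (\<integral>\<^sup>+z. ennreal (Cf \<alpha> \<beta> False z) * G z \<partial>(lborel \<Otimes>\<^sub>M lborel))"
  define I where "I = (\<integral>\<^sup>+ t. indicator {0..} t * ennreal (exp (- \<beta> * t)) *
                 (\<integral>\<^sup>+ x. indicator {x. \<bar>x\<bar> \<ge> \<alpha> * t} x *
                      (\<integral>\<^sup>+ \<omega>. ennreal ((u t x \<omega>)\<^sup>2) \<partial>M) \<partial>lborel) \<partial>lborel)"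
  have I_IC: "I = IC"
  proof -
    have "I = (\<integral>\<^sup>+t. \<integral>\<^sup>+x. ennreal (Cf \<alpha> \<beta> False (t, x)) * G (t, x) \<partial>lborel \<partial>lborel)"
      unfolding I_def
    proof (rule nn_integral_cong)
      fix t :: real
      show "indicator {0..} t * ennreal (exp (- \<beta> * t)) * (\<integral>\<^sup>+ x. indicator {x. \<bar>x\<bar> \<ge> \<alpha> * t} x *
                      (\<integral>\<^sup>+ \<omega>. ennreal ((u t x \<omega>)\<^sup>2) \<partial>M) \<partial>lborel) =
            (\<integral>\<^sup>+x. ennreal (Cf \<alpha> \<beta> False (t, x)) * G (t, x) \<partial>lborel)"
      proof (cases "0 \<le> t")
        case True
        have "indicator {0..} t * ennreal (exp (- \<beta> * t)) * (\<integral>\<^sup>+ x. indicator {x. \<bar>x\<bar> \<ge> \<alpha> * t} x *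
                      (\<integral>\<^sup>+ \<omega>. ennreal ((u t x \<omega>)\<^sup>2) \<partial>M) \<partial>lborel) =
            ennreal (exp (- \<beta> * t)) * (\<integral>\<^sup>+ x. indicator {x. \<bar>x\<bar> \<ge> \<alpha> * t} x * G (t, x) \<partial>lborel)"
          using True by (simp add: GF FF_def)
        also have "\<dots> = (\<integral>\<^sup>+ x. ennreal (exp (- \<beta> * t)) * (indicator {x. \<bar>x\<bar> \<ge> \<alpha> * t} x * G (t, x)) \<partial>lborel)"
          by (rule nn_integral_cmult[symmetric]) measurable
        also have "\<dots> = (\<integral>\<^sup>+x. ennreal (Cf \<alpha> \<beta> False (t, x)) * G (t, x) \<partial>lborel)"
          using True by (intro nn_integral_cong) (simp add: Cf_def indicator_def)
        finally show ?thesis .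
      next
        case False
        then show ?thesis by (simp add: Cf_def)
      qed
    qed
    also have "\<dots> = IC" unfolding IC_def
      by (rule lborel.nn_integral_fst[where f="\<lambda>z. ennreal (Cf \<alpha> \<beta> False z) * G z", simplified]) measurable
    finally show ?thesis .
  qed
  define k0 where "k0 = (\<integral>\<^sup>+q. ennreal (kf L \<kappa> \<alpha> \<beta> q) \<partial>(lborel \<Otimes>\<^sub>M lborel))"
  have k1: "1 < k0" unfolding k0_def using kappa_bound[OF kappa_pos a b cond[folded L_def]] .
  have contr: "k0 * IC \<le> IC"
  proof -
    have "(\<integral>\<^sup>+z. ennreal (Cf \<alpha> \<beta> True z) * (\<integral>\<^sup>+w. ennreal (Kf L \<kappa> z w) * G w \<partial>(lborel \<Otimes>\<^sub>M lborel)) \<partial>(lborel \<Otimes>\<^sub>M lborel)) \<le> IC"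
      unfolding IC_def
    proof (rule nn_integral_mono)
      fix z :: "real \<times> real"
      obtain t x where z: "z = (t, x)" by (cases z)
      show "ennreal (Cf \<alpha> \<beta> True z) * (\<integral>\<^sup>+w. ennreal (Kf L \<kappa> z w) * G w \<partial>(lborel \<Otimes>\<^sub>M lborel)) \<le> ennreal (Cf \<alpha> \<beta> False z) * G z"
      proof (cases "0 < t \<and> \<alpha> * t \<le> \<bar>x\<bar>")
        case True
        then have "Cf \<alpha> \<beta> True z = Cf \<alpha> \<beta> False z" by (simp add: Cf_def z)
        moreover have "(\<integral>\<^sup>+w. ennreal (Kf L \<kappa> z w) * G w \<partial>(lborel \<Otimes>\<^sub>M lborel)) \<le> G z"
          using MI2[of t x] GF[of t x] True by (simp add: z)
        ultimately show ?thesis by (simp add: mult_left_mono)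
      next
        case False then show ?thesis by (simp add: Cf_def z)
      qed
    qed
    moreover have "(\<integral>\<^sup>+z. ennreal (Cf \<alpha> \<beta> True z) * (\<integral>\<^sup>+w. ennreal (Kf L \<kappa> z w) * G w \<partial>(lborel \<Otimes>\<^sub>M lborel)) \<partial>(lborel \<Otimes>\<^sub>M lborel))
       = (\<integral>\<^sup>+z. (\<integral>\<^sup>+w. ennreal (Cf \<alpha> \<beta> True z * Kf L \<kappa> z w) * G w \<partial>(lborel \<Otimes>\<^sub>M lborel)) \<partial>(lborel \<Otimes>\<^sub>M lborel))"
    proof (rule nn_integral_cong)
      fix z :: "real \<times> real"
      have m: "(\<lambda>w. ennreal (Kf L \<kappa> z w) * G w) \<in> borel_measurable (lborel \<Otimes>\<^sub>M lborel)"
        using Kf_meas2[of L \<kappa> z] by measurable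
      show "ennreal (Cf \<alpha> \<beta> True z) * (\<integral>\<^sup>+w. ennreal (Kf L \<kappa> z w) * G w \<partial>(lborel \<Otimes>\<^sub>M lborel)) =
         (\<integral>\<^sup>+w. ennreal (Cf \<alpha> \<beta> True z * Kf L \<kappa> z w) * G w \<partial>(lborel \<Otimes>\<^sub>M lborel))"
        by (subst nn_integral_cmult[symmetric, OF m]) (simp add: ennreal_mult Cf_nonneg Kf_nonneg mult.assoc)
    qed
    moreover have "\<dots> = (\<integral>\<^sup>+w. (\<integral>\<^sup>+z. ennreal (Cf \<alpha> \<beta> True z * Kf L \<kappa> z w) * G w \<partial>(lborel \<Otimes>\<^sub>M lborel)) \<partial>(lborel \<Otimes>\<^sub>M lborel))"
    proof (rule LL2.Fubini'[symmetric])
      have "(\<lambda>p. ennreal (Cf \<alpha> \<beta> True (fst p) * Kf L \<kappa> (fst p) (snd p)) * G (snd p))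
          \<in> borel_measurable ((lborel \<Otimes>\<^sub>M lborel) \<Otimes>\<^sub>M (lborel \<Otimes>\<^sub>M lborel))"
        using Kf_meas[of L \<kappa>] by measurable
      then show "(\<lambda>(z, w). ennreal (Cf \<alpha> \<beta> True z * Kf L \<kappa> z w) * G w)
          \<in> borel_measurable ((lborel \<Otimes>\<^sub>M lborel) \<Otimes>\<^sub>M (lborel \<Otimes>\<^sub>M lborel))"
        by (simp add: case_prod_beta')
    qed
    moreover have "\<dots> = (\<integral>\<^sup>+w. G w * (\<integral>\<^sup>+z. ennreal (Cf \<alpha> \<beta> True z * Kf L \<kappa> z w) \<partial>(lborel \<Otimes>\<^sub>M lborel)) \<partial>(lborel \<Otimes>\<^sub>M lborel))"
    proof (rule nn_integral_cong)
      fix w :: "real \<times> real"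
      have m: "(\<lambda>z. ennreal (Cf \<alpha> \<beta> True z * Kf L \<kappa> z w)) \<in> borel_measurable (lborel \<Otimes>\<^sub>M lborel)"
        using Kf_meas1[of L \<kappa> w] by measurable
      show "(\<integral>\<^sup>+z. ennreal (Cf \<alpha> \<beta> True z * Kf L \<kappa> z w) * G w \<partial>(lborel \<Otimes>\<^sub>M lborel)) =
          G w * (\<integral>\<^sup>+z. ennreal (Cf \<alpha> \<beta> True z * Kf L \<kappa> z w) \<partial>(lborel \<Otimes>\<^sub>M lborel))"
        by (subst nn_integral_cmult[symmetric, OF m]) (simp add: mult.commute)
    qed
    moreover have "(\<integral>\<^sup>+w. G w * (ennreal (Cf \<alpha> \<beta> False w) * k0) \<partial>(lborel \<Otimes>\<^sub>M lborel)) \<le>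
        (\<integral>\<^sup>+w. G w * (\<integral>\<^sup>+z. ennreal (Cf \<alpha> \<beta> True z * Kf L \<kappa> z w) \<partial>(lborel \<Otimes>\<^sub>M lborel)) \<partial>(lborel \<Otimes>\<^sub>M lborel))"
    proof (rule nn_integral_mono)
      fix w :: "real \<times> real"
      obtain s y where w: "w = (s, y)" by (cases w)
      have "ennreal (Cf \<alpha> \<beta> False w) * k0 \<le> (\<integral>\<^sup>+z. ennreal (Cf \<alpha> \<beta> True z * Kf L \<kappa> z w) \<partial>(lborel \<Otimes>\<^sub>M lborel))"
      proof (cases "0 \<le> s \<and> \<alpha> * s \<le> \<bar>y\<bar>")
        case True
        then have "Cf \<alpha> \<beta> False w = exp (- \<beta> * s)" by (simp add: Cf_def w)
        then show ?thesis unfolding k0_def w using Jbound[OF a, of s y \<beta> L \<kappa>] True by simp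
      next
        case False
        then have "Cf \<alpha> \<beta> False w = 0" by (simp add: Cf_def w)
        then show ?thesis by simp
      qed
      then show "G w * (ennreal (Cf \<alpha> \<beta> False w) * k0) \<le> G w * (\<integral>\<^sup>+z. ennreal (Cf \<alpha> \<beta> True z * Kf L \<kappa> z w) \<partial>(lborel \<Otimes>\<^sub>M lborel))"
        by (rule mult_left_mono) simp
    qed
    moreover have "(\<integral>\<^sup>+w. G w * (ennreal (Cf \<alpha> \<beta> False w) * k0) \<partial>(lborel \<Otimes>\<^sub>M lborel)) = k0 * IC"
      unfolding IC_def by (subst nn_integral_cmult[symmetric]) (auto simp: ac_simps)
    ultimately show ?thesis by (metis (no_types, lifting) order_trans)
  qed
  have "I = \<infinity>"
  proof (rule ccontr)
    assume "I \<noteq> \<infinity>"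
    then have "IC < \<infinity>" using I_IC by (simp add: less_top)
    then have IC0: "IC = 0" using ennreal_contract[OF _ k1 contr] by simp
    have AE0: "AE z in lborel \<Otimes>\<^sub>M lborel. ennreal (Cf \<alpha> \<beta> False z) * G z = 0"
      using IC0 unfolding IC_def by (subst (asm) nn_integral_0_iff_AE) auto
    define S where "S = {1<..2::real} \<times> {2 * \<alpha>..2 * \<alpha> + 1}"
    have "emeasure (lborel \<Otimes>\<^sub>M lborel) S = emeasure lborel {1<..2::real} * emeasure lborel {2 * \<alpha>..2 * \<alpha> + 1}"
      unfolding S_def by (rule lborel.emeasure_pair_measure_Times) auto
    then have Spos: "emeasure (lborel \<Otimes>\<^sub>M lborel) S = 1" by simp
    obtain N where N: "{z \<in> space (lborel \<Otimes>\<^sub>M lborel). \<not> (ennreal (Cf \<alpha> \<beta> False z) * G z = 0)} \<subseteq> N"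
      "emeasure (lborel \<Otimes>\<^sub>M lborel) N = 0" "N \<in> sets (lborel \<Otimes>\<^sub>M lborel)"
      using AE0 by (rule AE_E)
    have "\<exists>z\<in>S. ennreal (Cf \<alpha> \<beta> False z) * G z = 0"
    proof (rule ccontr)
      assume "\<not> ?thesis"
      then have "S \<subseteq> N" using N(1) by (auto simp: space_pair_measure)
      then have "emeasure (lborel \<Otimes>\<^sub>M lborel) S \<le> emeasure (lborel \<Otimes>\<^sub>M lborel) N" by (rule emeasure_mono) (rule N(3))
      then show False using Spos N(2) by simp
    qed
    then obtain t x where tx: "(t, x) \<in> S" "ennreal (Cf \<alpha> \<beta> False (t, x)) * G (t, x) = 0" by auto
    have t: "0 < t" "t \<le> 2" and x: "2 * \<alpha> \<le> x" using tx(1) by (auto simp: S_def)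
    have "\<alpha> * t \<le> \<alpha> * 2" using a t by (intro mult_left_mono) auto
    then have "\<alpha> * t \<le> \<bar>x\<bar>" using x by linarith
    then have "Cf \<alpha> \<beta> False (t, x) = exp (- \<beta> * t)" using t by (simp add: Cf_def)
    then have "G (t, x) = 0" using tx(2) by simp
    then have "FF t x = 0" using GF[of t x] t by simp
    moreover have "0 < heat_semigroup \<kappa> t u0 x"
      using semigroup_pos[OF kappa_pos t(1) _ u0m u0_bounded u0_pos] u0_nonneg by blast
    then have "0 < ennreal ((heat_semigroup \<kappa> t u0 x)\<^sup>2)" by simp
    ultimately show False using MI1[OF t(1), of x] by simp
  qed
  then show ?thesis unfolding M_norm_def I_def[symmetric] by simp
qed

end



theorem proposition4p2:
  fixes M :: "'a measure" and F :: "real \<Rightarrow> 'a measure"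
    and W :: "(real \<times> real) set \<Rightarrow> 'a \<Rightarrow> real"
    and \<kappa> \<alpha> \<beta> :: real and \<sigma> u0 :: "real \<Rightarrow> real"
    and u :: "real \<Rightarrow> real \<Rightarrow> 'a \<Rightarrow> real"
  assumes noise: "white_noise M F W"
    and kappa_pos: "\<kappa> > 0"
    and sigma_lip: "\<exists>L. L-lipschitz_on UNIV \<sigma>"
    and sigma_zero: "\<sigma> 0 = 0"
    and L_pos: "L_sigma \<sigma> > 0"
    and u0_nonneg: "\<forall>x. u0 x \<ge> 0"
    and u0_bounded: "bounded (range u0)"
    and u0_lsc: "lsc u0"
    and u0_pos: "emeasure lborel {x. u0 x > 0} > 0"
    and sol: "mild_solution M F W \<kappa> \<sigma> u0 u"
    and ab_pos: "\<alpha> > 0" "\<beta> > 0"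
    and ab: "(\<alpha> - (L_sigma \<sigma>)\<^sup>2 / (4 * pi))\<^sup>2 < (L_sigma \<sigma>)^4 / (16 * pi\<^sup>2) - \<kappa> * \<beta>"
  shows "M_norm M \<alpha> \<beta> u = \<infinity>"
proof -
  have P: "prob_space M" using noise by (simp add: white_noise_def)
  interpret wn M F W by (rule wn.intro[OF P wn_axioms.intro[OF noise]])
  define L where "L = L_sigma \<sigma>"
  have e: "(\<alpha> - L\<^sup>2 / (4 * pi))\<^sup>2 = \<alpha>\<^sup>2 - \<alpha> * L\<^sup>2 / (2 * pi) + L^4 / (16 * pi\<^sup>2)"
    by (simp add: power2_diff power_divide field_simps power2_eq_square eval_nat_numeral)
  have cond: "\<alpha>\<^sup>2 + \<kappa> * \<beta> < \<alpha> * (L_sigma \<sigma>)\<^sup>2 / (2 * pi)"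
    using ab e unfolding L_def[symmetric] by simp
  show ?thesis
    by (rule final[OF kappa_pos sigma_lip sigma_zero u0_nonneg u0_bounded u0_lsc u0_pos sol ab_pos(1) ab_pos(2) cond])
qed

end
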